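(* Let $e>1$ be odd, $t\ge0$, $\mathbf c=(t+(1-e)/2,0)$, and let $\mu$ be a bipartition. Let $0\le j_1\ne j_2\le e-1$ and suppose $\tilde f_{j_i}|\mu,\mathbf c\rangle\ne0$ for $i=1,2$; write $\tilde f_{j_i}|\mu,\mathbf c\rangle=|\nu_i,\mathbf c\rangle$. Then the $e$-cores of $\Phi_t(\nu_1)$ and $\Phi_t(\nu_2)$ are distinct.
   Context: Crystal graph $\mathcal G_{\mathbf c,e}$: vertices $|\nu,\mathbf c\rangle$, $\nu$ a bipartition; nodes $(a,b,j)$ of $\nu^j$ have content $b-a+c_j$ and residue content mod $e$; for residue $i$ order the addable and removable $i$-nodes by increasing content (ties: larger $j$ first), write them as a word in $A$ (addable)/$R$ (removable), cancel consecutive $RA$ recursively to obtain $A^\alpha R^\beta$; if $\alpha>0$ the good addable $i$-node is that of the rightmost $A$. The Kashiwara operator $\tilde f_i$ maps $|\nu,\mathbf c\rangle$ to $|\nu\cup\{\gamma\},\mathbf c\rangle$ where $\gamma$ is the good addable $i$-node of $\nu$, and to $0$ if there is none. $\Delta_t=(t,\dots,1)$. For a partition $\lambda$ with $\beta$-set $B$ of odd size, $\lambda^{(2)}=(\pi\{x/2:x\in B\text{ even}\},\pi\{(x-1)/2:x\in B\text{ odd}\})$, $\pi(X)$ the partition with $\beta$-set $X$; if $\lambda$ has $2$-core $\Delta_t$, $\bar\lambda^{(2)}$ equals $\lambda^{(2)}$ for $t$ even and the swapped pair for $t$ odd; $\Phi_t(\nu)$ is the unique partition with $2$-core $\Delta_t$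 and $\bar\lambda^{(2)}=\nu$. *)

theory Defs
  imports Main
begin

definition is_partition :: "nat list \<Rightarrow> bool" where
  "is_partition lam \<longleftrightarrow> sorted_wrt (\<ge>) lam \<and> 0 \<notin> set lam"

definition part :: "nat list \<Rightarrow> nat \<Rightarrow> nat" where
  "part lam i = (if 1 \<le> i \<and> i \<le> length lam then lam ! (i - 1) else 0)"

text \<open>Young diagram: nodes (a,b), row a, column b, both 1-based.\<close>
definition dg :: "nat list \<Rightarrow> (nat \<times> nat) set" where
  "dg lam = {(a, b). 1 \<le> a \<and> a \<le> length lam \<and> 1 \<le> b \<and> b \<le> lam ! (a - 1)}"

definition addable :: "nat list \<Rightarrow> nat \<times> nat \<Rightarrow> bool" where
  "addable lam n \<longleftrightarrow> (case n of (a, b) \<Rightarrow>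
     1 \<le> a \<and> 1 \<le> b \<and> (a, b) \<notin> dg lam \<and>
     (a = 1 \<or> (a - 1, b) \<in> dg lam) \<and> (b = 1 \<or> (a, b - 1) \<in> dg lam))"

definition removable :: "nat list \<Rightarrow> nat \<times> nat \<Rightarrow> bool" where
  "removable lam n \<longleftrightarrow> (case n of (a, b) \<Rightarrow>
     (a, b) \<in> dg lam \<and> (a + 1, b) \<notin> dg lam \<and> (a, b + 1) \<notin> dg lam)"

definition part_of_dg :: "(nat \<times> nat) set \<Rightarrow> nat list" where
  "part_of_dg D = (THE lam. is_partition lam \<and> dg lam = D)"

type_synonym bipartition = "nat list \<times> nat list"

definition comp :: "bipartition \<Rightarrow> nat \<Rightarrow> nat list" where
  "comp nu j = (if j = 1 then fst nu else snd nu)"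

text \<open>Nodes of a bipartition: triples (a,b,j) with (a,b) a node of nu^j, j \<in> {1,2}.
  The multicharge c = (c_1, c_2) is a pair of integers.\<close>
definition content :: "int \<times> int \<Rightarrow> nat \<times> nat \<times> nat \<Rightarrow> int" where
  "content c n = (case n of (a, b, j) \<Rightarrow>
     int b - int a + (if j = 1 then fst c else snd c))"

definition residue :: "nat \<Rightarrow> int \<times> int \<Rightarrow> nat \<times> nat \<times> nat \<Rightarrow> int" where
  "residue e c n = content c n mod int e"

definition addable_node :: "bipartition \<Rightarrow> nat \<times> nat \<times> nat \<Rightarrow> bool" where
  "addable_node nu n \<longleftrightarrow> (case n of (a, b, j) \<Rightarrow>
     (j = 1 \<or> j = 2) \<and> addable (comp nu j) (a, b))"

definition removable_node :: "bipartition \<Rightarrow> nat \<times> nat \<times> nat \<Rightarrow> bool" where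
  "removable_node nu n \<longleftrightarrow> (case n of (a, b, j) \<Rightarrow>
     (j = 1 \<or> j = 2) \<and> removable (comp nu j) (a, b))"

datatype letter = LA | LR

definition node_less :: "int \<times> int \<Rightarrow> nat \<times> nat \<times> nat \<Rightarrow> nat \<times> nat \<times> nat \<Rightarrow> bool" where
  "node_less c x y \<longleftrightarrow> content c x < content c y \<or>
     (content c x = content c y \<and> snd (snd x) > snd (snd y))"

definition sig_set :: "nat \<Rightarrow> int \<times> int \<Rightarrow> nat \<Rightarrow> bipartition \<Rightarrow> (letter \<times> (nat \<times> nat \<times> nat)) set" where
  "sig_set e c i nu =
     {(LA, n) | n. addable_node nu n \<and> residue e c n = int i} \<union>
     {(LR, n) | n. removable_node nu n \<and> residue e c n = int i}"

definition is_sig_word :: "nat \<Rightarrow> int \<times> int \<Rightarrow> nat \<Rightarrow> bipartition \<Rightarrow> (letter \<times> (nat \<times> nat \<times> nat)) list \<Rightarrow> bool" where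
  "is_sig_word e c i nu w \<longleftrightarrow> distinct w \<and> set w = sig_set e c i nu \<and>
     sorted_wrt (\<lambda>x y. node_less c (snd x) (snd y)) w"

definition cancelRA :: "(letter \<times> 'n) list \<Rightarrow> (letter \<times> 'n) list \<Rightarrow> bool" where
  "cancelRA w w' \<longleftrightarrow> (\<exists>u v x y. w = u @ (LR, x) # (LA, y) # v \<and> w' = u @ v)"

definition RA_free :: "(letter \<times> 'n) list \<Rightarrow> bool" where
  "RA_free w \<longleftrightarrow> \<not> (\<exists>u v x y. w = u @ (LR, x) # (LA, y) # v)"

text \<open>gamma is the good addable i-node of nu: it is the node of the rightmost A
  in the reduced word A^alpha R^beta.\<close>
definition good_addable :: "nat \<Rightarrow> int \<times> int \<Rightarrow> nat \<Rightarrow> bipartition \<Rightarrow> nat \<times> nat \<times> nat \<Rightarrow> bool" where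
  "good_addable e c i nu g \<longleftrightarrow> (\<exists>w w'. is_sig_word e c i nu w \<and> cancelRA\<^sup>*\<^sup>* w w' \<and> RA_free w' \<and>
     (\<exists>u v. w' = u @ (LA, g) # v \<and> (\<forall>z \<in> set v. fst z = LR)))"

definition add_node :: "bipartition \<Rightarrow> nat \<times> nat \<times> nat \<Rightarrow> bipartition" where
  "add_node nu n = (case n of (a, b, j) \<Rightarrow>
     (if j = 1 then (part_of_dg (dg (fst nu) \<union> {(a, b)}), snd nu)
      else (fst nu, part_of_dg (dg (snd nu) \<union> {(a, b)}))))"

text \<open>Kashiwara operator: None stands for 0.\<close>
definition ftilde :: "nat \<Rightarrow> int \<times> int \<Rightarrow> nat \<Rightarrow> bipartition \<Rightarrow> bipartition option" where
  "ftilde e c i nu = (if \<exists>g. good_addable e c i nu g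
     then Some (add_node nu (THE g. good_addable e c i nu g)) else None)"

definition adjacent :: "nat \<times> nat \<Rightarrow> nat \<times> nat \<Rightarrow> bool" where
  "adjacent x y \<longleftrightarrow> (case x of (a, b) \<Rightarrow> case y of (a', b') \<Rightarrow>
     (a = a' \<and> (b' = b + 1 \<or> b = b' + 1)) \<or> (b = b' \<and> (a' = a + 1 \<or> a = a' + 1)))"

definition connected_nodes :: "(nat \<times> nat) set \<Rightarrow> bool" where
  "connected_nodes S \<longleftrightarrow> (\<forall>x\<in>S. \<forall>y\<in>S. (\<lambda>p q. p \<in> S \<and> q \<in> S \<and> adjacent p q)\<^sup>*\<^sup>* x y)"

definition remove_rim_hook :: "nat \<Rightarrow> nat list \<Rightarrow> nat list \<Rightarrow> bool" where
  "remove_rim_hook e lam mu \<longleftrightarrow> is_partition mu \<and> dg mu \<subseteq> dg lam \<and>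
     card (dg lam - dg mu) = e \<and> connected_nodes (dg lam - dg mu) \<and>
     \<not> (\<exists>a b. {(a, b), (a + 1, b), (a, b + 1), (a + 1, b + 1)} \<subseteq> dg lam - dg mu)"

definition is_ecore_of :: "nat \<Rightarrow> nat list \<Rightarrow> nat list \<Rightarrow> bool" where
  "is_ecore_of e lam kappa \<longleftrightarrow> (remove_rim_hook e)\<^sup>*\<^sup>* lam kappa \<and>
     \<not> (\<exists>mu. remove_rim_hook e kappa mu)"

definition ecore :: "nat \<Rightarrow> nat list \<Rightarrow> nat list" where
  "ecore e lam = (THE kappa. is_ecore_of e lam kappa)"

text \<open>The beta-set of lam of size m (m \<ge> length lam).\<close>
definition beta :: "nat \<Rightarrow> nat list \<Rightarrow> nat set" where
  "beta m lam = {part lam i + m - i | i. 1 \<le> i \<and> i \<le> m}"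

definition pi_beta :: "nat set \<Rightarrow> nat list" where
  "pi_beta X = (THE lam. is_partition lam \<and> length lam \<le> card X \<and> beta (card X) lam = X)"

text \<open>A beta-set of odd size: size length lam or length lam + 1.\<close>
definition odd_size :: "nat list \<Rightarrow> nat" where
  "odd_size lam = (if odd (length lam) then length lam else Suc (length lam))"

definition quot2 :: "nat list \<Rightarrow> nat list \<times> nat list" where
  "quot2 lam = (let B = beta (odd_size lam) lam in
     (pi_beta {x div 2 | x. x \<in> B \<and> even x}, pi_beta {(x - 1) div 2 | x. x \<in> B \<and> odd x}))"

definition barquot2 :: "nat \<Rightarrow> nat list \<Rightarrow> nat list \<times> nat list" where
  "barquot2 t lam = (if even t then quot2 lam else prod.swap (quot2 lam))"

definition staircase :: "nat \<Rightarrow> nat list" where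
  "staircase t = rev [1..<Suc t]"

definition Phi :: "nat \<Rightarrow> bipartition \<Rightarrow> nat list" where
  "Phi t nu = (THE lam. is_partition lam \<and> ecore 2 lam = staircase t \<and> barquot2 t lam = nu)"

definition charge :: "nat \<Rightarrow> nat \<Rightarrow> int \<times> int" where
  "charge e t = (int t + (1 - int e) div 2, 0)"

end

theory Submission
  imports Defs
begin


lemma part_zero: "a = 0 \<or> length lam < a \<Longrightarrow> part lam a = 0"
  by (auto simp: part_def)

lemma dg_part: "dg lam = {(a, b). 1 \<le> a \<and> 1 \<le> b \<and> b \<le> part lam a}"
  by (auto simp: dg_def part_def split: if_splits)

lemma part_mono:
  assumes "is_partition lam" "1 \<le> a" "a \<le> a'"
  shows "part lam a' \<le> part lam a"
proof (cases "a' \<le> length lam")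
  case True
  show ?thesis
  proof (cases "a = a'")
    case False
    hence "a - 1 < a' - 1" using assms by auto
    hence "lam ! (a - 1) \<ge> lam ! (a' - 1)"
      using assms(1) True by (auto simp: is_partition_def intro: sorted_wrt_nth_less[where P="(\<ge>)", simplified])
    thus ?thesis using True assms by (auto simp: part_def)
  qed simp
qed (auto simp: part_def)

lemma part_pos:
  assumes "is_partition lam"
  shows "0 < part lam a \<longleftrightarrow> 1 \<le> a \<and> a \<le> length lam"
proof -
  have "1 \<le> a \<Longrightarrow> a \<le> length lam \<Longrightarrow> lam ! (a - 1) \<noteq> 0"
  proof -
    assume a: "1 \<le> a" "a \<le> length lam"
    hence "lam ! (a - 1) \<in> set lam" by (intro nth_mem) simp
    hence "lam ! (a - 1) \<noteq> 0" using assms unfolding is_partition_def by metis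
    thus ?thesis by simp
  qed
  thus ?thesis by (auto simp: part_def)
qed

lemma part_eq:
  assumes "is_partition l1" "is_partition l2" "\<And>a. 1 \<le> a \<Longrightarrow> part l1 a = part l2 a"
  shows "l1 = l2"
proof -
  have len: "length l1 = length l2"
  proof (rule ccontr)
    assume "length l1 \<noteq> length l2"
    then consider "length l1 < length l2" | "length l2 < length l1" by linarith
    thus False
    proof cases
      case 1
      hence "0 < part l2 (length l2)" "part l1 (length l2) = 0"
        using part_pos[OF assms(2)] part_zero by auto
      thus ?thesis using assms(3)[of "length l2"] 1 by simp
    next
      case 2
      hence "0 < part l1 (length l1)" "part l2 (length l1) = 0"
        using part_pos[OF assms(1)] part_zero by auto
      thus ?thesis using assms(3)[of "length l1"] 2 by simp
    qed
  qed
  show ?thesis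
  proof (rule nth_equalityI[OF len])
    fix i assume "i < length l1"
    thus "l1 ! i = l2 ! i" using assms(3)[of "Suc i"] len by (simp add: part_def)
  qed
qed

lemma mk_partition:
  fixes f :: "nat \<Rightarrow> nat"
  assumes anti: "\<And>a a'. 1 \<le> a \<Longrightarrow> a \<le> a' \<Longrightarrow> f a' \<le> f a"
    and fin: "\<And>a. n < a \<Longrightarrow> f a = 0"
  shows "\<exists>lam. is_partition lam \<and> length lam \<le> n \<and> (\<forall>a. 1 \<le> a \<longrightarrow> part lam a = f a)"
proof -
  define K where "K = Max ({0} \<union> {a \<in> {1..n}. 0 < f a})"
  have finK: "finite ({0} \<union> {a \<in> {1..n}. 0 < f a})" by auto
  have Kn: "K \<le> n" unfolding K_def using finK by (auto intro!: Max.boundedI)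
  have pos: "1 \<le> a \<Longrightarrow> a \<le> K \<Longrightarrow> 0 < f a" for a
  proof -
    assume a: "1 \<le> a" "a \<le> K"
    hence "K \<in> {a \<in> {1..n}. 0 < f a}"
      using Max_in[OF finK] unfolding K_def by auto
    hence "0 < f K" by auto
    thus ?thesis using anti[OF a] by linarith
  qed
  have zero: "K < a \<Longrightarrow> f a = 0" for a
  proof (rule ccontr)
    assume "K < a" "f a \<noteq> 0"
    moreover hence "a \<le> n" using fin by (metis not_le)
    ultimately have "a \<in> {a \<in> {1..n}. 0 < f a}" by auto
    hence "a \<le> K" unfolding K_def using finK by auto
    thus False using \<open>K < a\<close> by simp
  qed
  define lam where "lam = map (\<lambda>i. f (Suc i)) [0..<K]"
  have pl: "1 \<le> a \<Longrightarrow> part lam a = f a" for a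
    using zero[of a] by (auto simp: part_def lam_def)
  have "sorted_wrt (\<ge>) lam"
    unfolding sorted_wrt_iff_nth_less lam_def by (auto intro!: anti)
  moreover have "0 \<notin> set lam"
  proof -
    { fix i assume "i < K" hence "0 < f (Suc i)" using pos[of "Suc i"] by simp }
    thus ?thesis unfolding lam_def by fastforce
  qed
  ultimately show ?thesis using pl Kn by (auto simp: is_partition_def lam_def)
qed

definition sdec :: "nat \<Rightarrow> (nat \<Rightarrow> nat) \<Rightarrow> bool" where
  "sdec m p \<longleftrightarrow> (\<forall>a a'. 1 \<le> a \<longrightarrow> a < a' \<longrightarrow> a' \<le> m \<longrightarrow> p a' < p a)"

lemma sdec_gap:
  assumes "sdec m p" "1 \<le> a" "a \<le> a'" "a' \<le> m"
  shows "p a' + (a' - a) \<le> p a"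
  using assms(3,4)
proof (induction a' rule: dec_induct)
  case (step k)
  have "p (Suc k) < p k" using assms(1,2) step by (auto simp: sdec_def)
  thus ?case using step by auto
qed simp

lemma sdec_lower:
  assumes "sdec m p" "1 \<le> a" "a \<le> m"
  shows "m - a \<le> p a"
  using sdec_gap[OF assms(1,2,3) order_refl] by simp

lemma sdec_inj: "sdec m p \<Longrightarrow> inj_on p {1..m}"
  unfolding inj_on_def
proof (intro ballI impI)
  fix x y assume s: "sdec m p" and xy: "x \<in> {1..m}" "y \<in> {1..m}" "p x = p y"
  show "x = y"
  proof (rule ccontr)
    assume "x \<noteq> y"
    then consider "x < y" | "y < x" by linarith
    thus False
    proof cases
      case 1 thus ?thesis using s xy unfolding sdec_def by force
    next
      case 2 thus ?thesis using s xy unfolding sdec_def by force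
    qed
  qed
qed

lemma sdec_rank:
  assumes "sdec m p" "1 \<le> a" "a \<le> m"
  shows "{y \<in> p ` {1..m}. p a < y} = p ` {1..<a}"
proof
  show "{y \<in> p ` {1..m}. p a < y} \<subseteq> p ` {1..<a}"
  proof
    fix y assume "y \<in> {y \<in> p ` {1..m}. p a < y}"
    then obtain c where c: "c \<in> {1..m}" "y = p c" "p a < p c" by auto
    have "c < a"
    proof (rule ccontr)
      assume "\<not> c < a"
      hence "a \<le> c" by simp
      show False
      proof (cases "a = c")
        case True thus ?thesis using c by simp
      next
        case False
        hence "p c < p a" using \<open>a \<le> c\<close> c(1) assms unfolding sdec_def by auto
        thus ?thesis using c by simp
      qed
    qed
    thus "y \<in> p ` {1..<a}" using c by auto
  qed
next
  show "p ` {1..<a} \<subseteq> {y \<in> p ` {1..m}. p a < y}"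
    using assms unfolding sdec_def by auto
qed

lemma sdec_unique:
  assumes "sdec m p" "sdec m q" "p ` {1..m} = q ` {1..m}" "1 \<le> a" "a \<le> m"
  shows "p a = q a"
proof (rule ccontr)
  let ?X = "p ` {1..m}"
  have sub: "{1..<a} \<subseteq> {1..m}" using assms by auto
  have cp: "card {y \<in> ?X. p a < y} = a - 1"
  proof -
    have "card (p ` {1..<a}) = a - 1"
      using card_image[OF inj_on_subset[OF sdec_inj[OF assms(1)] sub]] by simp
    thus ?thesis using sdec_rank[OF assms(1,4,5)] by simp
  qed
  have cq: "card {y \<in> ?X. q a < y} = a - 1"
  proof -
    have "card (q ` {1..<a}) = a - 1"
      using card_image[OF inj_on_subset[OF sdec_inj[OF assms(2)] sub]] by simp
    thus ?thesis using sdec_rank[OF assms(2,4,5)] assms(3) by simp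
  qed
  have pa: "p a \<in> ?X" and qa: "q a \<in> ?X" using assms by auto
  assume ne: "p a \<noteq> q a"
  have fin: "finite ?X" by auto
  { fix u v assume u: "u \<in> ?X" and v: "v \<in> ?X" and uv: "u < v"
      and cu: "card {y \<in> ?X. u < y} = a - 1" and cv: "card {y \<in> ?X. v < y} = a - 1"
    have "insert v {y \<in> ?X. v < y} \<subseteq> {y \<in> ?X. u < y}" using v uv by auto
    hence "card (insert v {y \<in> ?X. v < y}) \<le> card {y \<in> ?X. u < y}"
      by (intro card_mono) (use fin in auto)
    hence False using cu cv by (simp add: fin)
  } note * = this
  show False
    using ne *[OF pa qa _ cp cq] *[OF qa pa _ cq cp] by linarith
qed

definition bp :: "nat \<Rightarrow> nat list \<Rightarrow> nat \<Rightarrow> nat" where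
  "bp m lam a = part lam a + m - a"

lemma beta_bp: "beta m lam = bp m lam ` {1..m}"
  by (auto simp: beta_def bp_def)

lemma len_le_part0: "is_partition lam \<Longrightarrow> length lam \<le> m \<Longrightarrow> m < a \<Longrightarrow> part lam a = 0"
  by (simp add: part_zero)

lemma sdec_bp: "is_partition lam \<Longrightarrow> length lam \<le> m \<Longrightarrow> sdec m (bp m lam)"
  unfolding sdec_def bp_def
proof (intro allI impI)
  fix a a' assume "is_partition lam" "1 \<le> a" "a < a'" "a' \<le> m"
  thus "part lam a' + m - a' < part lam a + m - a"
    using part_mono[of lam a a'] by linarith
qed

lemma finite_beta: "finite (beta m lam)"
  by (simp add: beta_bp)

lemma card_beta: "is_partition lam \<Longrightarrow> length lam \<le> m \<Longrightarrow> card (beta m lam) = m"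
  using sdec_inj[OF sdec_bp] by (simp add: beta_bp card_image)

lemma beta_inj:
  assumes "is_partition l1" "is_partition l2" "length l1 \<le> m" "length l2 \<le> m"
    "beta m l1 = beta m l2"
  shows "l1 = l2"
proof (rule part_eq[OF assms(1,2)])
  fix a :: nat assume a: "1 \<le> a"
  show "part l1 a = part l2 a"
  proof (cases "a \<le> m")
    case True
    have "bp m l1 a = bp m l2 a"
      using sdec_unique[OF sdec_bp[OF assms(1,3)] sdec_bp[OF assms(2,4)]] assms(5) a True
      by (simp add: beta_bp)
    thus ?thesis using True by (simp add: bp_def)
  next
    case False thus ?thesis using assms by (simp add: part_zero)
  qed
qed

lemma sdec_partition:
  assumes "sdec m q"
  shows "\<exists>lam. is_partition lam \<and> length lam \<le> m \<and> (\<forall>a. 1 \<le> a \<longrightarrow> a \<le> m \<longrightarrow> bp m lam a = q a)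
     \<and> beta m lam = q ` {1..m}"
proof -
  define f where "f a = (if 1 \<le> a \<and> a \<le> m then q a - (m - a) else 0)" for a
  have anti: "f a' \<le> f a" if "1 \<le> a" "a \<le> a'" for a a'
  proof (cases "a' \<le> m")
    case True
    have "q a' + (a' - a) \<le> q a" using sdec_gap[OF assms that True] .
    moreover have "m - a' \<le> q a'" using sdec_lower[OF assms _ True] that by simp
    ultimately show ?thesis using that True by (simp add: f_def)
  qed (simp add: f_def)
  obtain lam where lam: "is_partition lam" "length lam \<le> m" "\<And>a. 1 \<le> a \<Longrightarrow> part lam a = f a"
    using mk_partition[of f m] anti by (auto simp: f_def)
  have bq: "bp m lam a = q a" if "1 \<le> a" "a \<le> m" for a
    using sdec_lower[OF assms that] that lam(3)[of a] by (simp add: bp_def f_def)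
  have "beta m lam = q ` {1..m}" unfolding beta_bp using bq by (auto simp: image_def)
  thus ?thesis using lam bq by blast
qed

lemma beta_exists:
  assumes "finite X" "card X = m"
  shows "\<exists>lam. is_partition lam \<and> length lam \<le> m \<and> beta m lam = X"
proof -
  define xs where "xs = sorted_list_of_set X"
  have xs: "sorted_wrt (<) xs" "set xs = X" "length xs = m"
    using assms by (auto simp: xs_def strict_sorted_list_of_set)
  define q where "q a = xs ! (m - a)" for a
  have "sdec m q" unfolding sdec_def q_def
    using xs by (auto intro!: sorted_wrt_nth_less[OF xs(1)])
  moreover have "q ` {1..m} = X"
  proof -
    have "q ` {1..m} = (\<lambda>i. xs ! i) ` {..<m}"
      unfolding q_def
    proof (rule set_eqI, rule iffI)
      fix y assume "y \<in> (\<lambda>a. xs ! (m - a)) ` {1..m}"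
      then obtain a where "a \<in> {1..m}" "y = xs ! (m - a)" by auto
      thus "y \<in> (\<lambda>i. xs ! i) ` {..<m}" by force
    next
      fix y assume "y \<in> (\<lambda>i. xs ! i) ` {..<m}"
      then obtain i where i: "i < m" "y = xs ! i" by auto
      hence "m - i \<in> {1..m}" "xs ! (m - (m - i)) = y" by auto
      thus "y \<in> (\<lambda>a. xs ! (m - a)) ` {1..m}" by (metis image_eqI)
    qed
    also have "\<dots> = set xs" using xs(3) by (auto simp: in_set_conv_nth)
    finally show ?thesis using xs by simp
  qed
  ultimately show ?thesis using sdec_partition by metis
qed

lemma pi_beta_props:
  assumes "finite X"
  shows "is_partition (pi_beta X) \<and> length (pi_beta X) \<le> card X \<and> beta (card X) (pi_beta X) = X"
proof -
  have "\<exists>!lam. is_partition lam \<and> length lam \<le> card X \<and> beta (card X) lam = X"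
    using beta_exists[OF assms refl] beta_inj by blast
  thus ?thesis unfolding pi_beta_def by (rule theI')
qed

lemma pi_beta_beta:
  assumes "is_partition lam" "length lam \<le> m"
  shows "pi_beta (beta m lam) = lam"
proof -
  have "is_partition (pi_beta (beta m lam)) \<and> length (pi_beta (beta m lam)) \<le> m \<and>
        beta m (pi_beta (beta m lam)) = beta m lam"
    using pi_beta_props[OF finite_beta, of m lam] card_beta[OF assms] by simp
  thus ?thesis using beta_inj assms by blast
qed

lemma beta_Suc:
  assumes "length lam \<le> m"
  shows "beta (Suc m) lam = insert 0 (Suc ` beta m lam)"
proof -
  have "beta (Suc m) lam = bp (Suc m) lam ` {1..Suc m}" by (rule beta_bp)
  also have "{1..Suc m} = insert (Suc m) {1..m}" by auto
  finally have 1: "beta (Suc m) lam = insert (bp (Suc m) lam (Suc m)) (bp (Suc m) lam ` {1..m})" by simp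
  have 2: "bp (Suc m) lam (Suc m) = 0" using assms by (simp add: bp_def part_zero)
  have 3: "bp (Suc m) lam ` {1..m} = Suc ` bp m lam ` {1..m}"
    unfolding image_image by (rule image_cong) (auto simp: bp_def)
  show ?thesis using 1 2 3 by (simp add: beta_bp)
qed

lemma pi_beta_shift:
  assumes "finite X"
  shows "pi_beta (insert 0 (Suc ` X)) = pi_beta X"
proof -
  let ?l = "pi_beta X"
  have p: "is_partition ?l" "length ?l \<le> card X" "beta (card X) ?l = X"
    using pi_beta_props[OF assms] by auto
  have "beta (Suc (card X)) ?l = insert 0 (Suc ` X)" using beta_Suc[OF p(2)] p(3) by simp
  thus ?thesis using pi_beta_beta[OF p(1), of "Suc (card X)"] p(2) by simp
qed


lemma dg_sub_part:
  assumes "is_partition mu" "dg mu \<subseteq> dg lam" "1 \<le> a"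
  shows "part mu a \<le> part lam a"
proof (rule ccontr)
  assume "\<not> part mu a \<le> part lam a"
  hence "(a, part mu a) \<in> dg mu" "(a, part mu a) \<notin> dg lam" using assms(3) by (auto simp: dg_part)
  thus False using assms(2) by blast
qed

lemma dg_sub_len:
  assumes "is_partition mu" "is_partition lam" "dg mu \<subseteq> dg lam"
  shows "length mu \<le> length lam"
proof (rule ccontr)
  assume n: "\<not> length mu \<le> length lam"
  hence "0 < part mu (length mu)" using part_pos[OF assms(1)] by auto
  moreover have "part lam (length mu) = 0" using n by (simp add: part_zero)
  ultimately show False using dg_sub_part[OF assms(1,3), of "length mu"] n by auto
qed

lemma dg_diff: "dg lam - dg mu = {(a, b). 1 \<le> a \<and> part mu a < b \<and> b \<le> part lam a}"
  by (auto simp: dg_part)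

lemma card_dg_diff:
  assumes "length lam \<le> m"
  shows "card (dg lam - dg mu) = (\<Sum>a\<in>{1..m}. part lam a - part mu a)"
proof -
  have "dg lam - dg mu = (SIGMA a:{1..m}. {part mu a<..part lam a})"
  proof -
    have "m < a \<Longrightarrow> part lam a = 0" for a using assms by (simp add: part_zero)
    hence "part mu a < b \<Longrightarrow> b \<le> part lam a \<Longrightarrow> a \<le> m" for a b by (cases "a \<le> m") auto
    thus ?thesis unfolding dg_diff by auto
  qed
  thus ?thesis by simp
qed

lemma finite_dg: "finite (dg lam)"
proof -
  have "dg lam \<subseteq> {..length lam} \<times> {..sum_list lam}"
  proof
    fix x assume "x \<in> dg lam"
    then obtain a b where x: "x = (a, b)" "1 \<le> a" "a \<le> length lam" "b \<le> lam ! (a - 1)"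
      unfolding dg_def by auto
    have "lam ! (a - 1) \<le> sum_list lam" using x by (intro elem_le_sum_list) simp
    thus "x \<in> {..length lam} \<times> {..sum_list lam}" using x by auto
  qed
  thus ?thesis using finite_subset by blast
qed

lemma sum_beta:
  assumes "is_partition lam" "is_partition mu" "length lam \<le> m" "length mu \<le> m"
    "\<And>a. 1 \<le> a \<Longrightarrow> part mu a \<le> part lam a"
  shows "\<Sum>(beta m lam) = \<Sum>(beta m mu) + card (dg lam - dg mu)"
proof -
  have 1: "\<Sum>(beta m lam) = (\<Sum>a\<in>{1..m}. bp m lam a)"
    unfolding beta_bp by (rule sum.reindex_cong[OF sdec_inj[OF sdec_bp[OF assms(1,3)]]]) auto
  have 2: "\<Sum>(beta m mu) = (\<Sum>a\<in>{1..m}. bp m mu a)"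
    unfolding beta_bp by (rule sum.reindex_cong[OF sdec_inj[OF sdec_bp[OF assms(2,4)]]]) auto
  have "(\<Sum>a\<in>{1..m}. bp m lam a) = (\<Sum>a\<in>{1..m}. bp m mu a + (part lam a - part mu a))"
    using assms(5) by (intro sum.cong) (auto simp: bp_def)
  thus ?thesis using 1 2 card_dg_diff[OF assms(3)] by (simp add: sum.distrib)
qed

lemma shift_image:
  assumes inj: "inj_on p {1..m}" and a: "1 \<le> a1" "a1 \<le> a2" "a2 \<le> m"
    and out: "\<And>a. 1 \<le> a \<Longrightarrow> a \<le> m \<Longrightarrow> a < a1 \<or> a2 < a \<Longrightarrow> q a = p a"
    and sh: "\<And>a. a1 \<le> a \<Longrightarrow> a < a2 \<Longrightarrow> q a = p (Suc a)"
  shows "q ` {1..m} = insert (q a2) (p ` {1..m} - {p a1})"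
proof (rule set_eqI, rule iffI)
  fix y assume "y \<in> q ` {1..m}"
  then obtain a where aa: "a \<in> {1..m}" "y = q a" by auto
  consider "a = a2" | "a1 \<le> a \<and> a < a2" | "a < a1 \<or> a2 < a" by linarith
  thus "y \<in> insert (q a2) (p ` {1..m} - {p a1})"
  proof cases
    case 2
    hence "y = p (Suc a)" "Suc a \<in> {1..m}" "Suc a \<noteq> a1" using aa sh a by auto
    moreover hence "p (Suc a) \<noteq> p a1" using inj a inj_onD[OF inj, of "Suc a" a1] by auto
    ultimately show ?thesis by auto
  next
    case 3
    hence "y = p a" "a \<noteq> a1" using aa out a by auto
    moreover hence "p a \<noteq> p a1" using inj a aa inj_onD[OF inj, of a a1] by auto
    ultimately show ?thesis using aa by auto
  qed (use aa in auto)
next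
  fix y assume y: "y \<in> insert (q a2) (p ` {1..m} - {p a1})"
  show "y \<in> q ` {1..m}"
  proof (cases "y = q a2")
    case True thus ?thesis using a by auto
  next
    case False
    then obtain c where c: "c \<in> {1..m}" "y = p c" "c \<noteq> a1" using y by force
    consider "c < a1 \<or> a2 < c" | "a1 < c \<and> c \<le> a2" using c by linarith
    thus ?thesis
    proof cases
      case 1 hence "q c = y" using out[of c] c by auto
      thus ?thesis using c(1) by blast
    next
      case 2
      hence "q (c - 1) = p c" using sh[of "c - 1"] by auto
      moreover have "c - 1 \<in> {1..m}" using 2 a c by auto
      ultimately show ?thesis using c by force
    qed
  qed
qed

definition Rel :: "(nat \<times> nat) set \<Rightarrow> nat \<times> nat \<Rightarrow> nat \<times> nat \<Rightarrow> bool" where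
  "Rel S p q \<longleftrightarrow> p \<in> S \<and> q \<in> S \<and> adjacent p q"

lemma connected_Rel: "connected_nodes S \<longleftrightarrow> (\<forall>x\<in>S. \<forall>y\<in>S. (Rel S)\<^sup>*\<^sup>* x y)"
  unfolding connected_nodes_def Rel_def[abs_def] by simp

lemma rrh_beta:
  assumes lam: "is_partition lam" "length lam \<le> m" and r: "remove_rim_hook e lam mu" and e: "0 < e"
  shows "is_partition mu \<and> length mu \<le> m \<and> (\<exists>x. x \<in> beta m lam \<and> e \<le> x \<and> x - e \<notin> beta m lam \<and>
           beta m mu = insert (x - e) (beta m lam - {x}))"
proof -
  have mu: "is_partition mu" and sub: "dg mu \<subseteq> dg lam" and cS: "card (dg lam - dg mu) = e"
    and con: "connected_nodes (dg lam - dg mu)"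
    and no22: "\<not> (\<exists>a b. {(a, b), (a + 1, b), (a, b + 1), (a + 1, b + 1)} \<subseteq> dg lam - dg mu)"
    using r unfolding remove_rim_hook_def by auto
  define S where "S = dg lam - dg mu"
  have S: "S = {(a, b). 1 \<le> a \<and> part mu a < b \<and> b \<le> part lam a}" unfolding S_def dg_diff ..
  have le: "1 \<le> a \<Longrightarrow> part mu a \<le> part lam a" for a using dg_sub_part[OF mu sub] .
  have lmu: "length mu \<le> m" using dg_sub_len[OF mu lam(1) sub] lam(2) by simp
  define R where "R = {a. 1 \<le> a \<and> part mu a < part lam a}"
  have Rm: "R \<subseteq> {1..m}"
  proof
    fix a assume "a \<in> R"
    hence "1 \<le> a" "0 < part lam a" unfolding R_def by auto
    thus "a \<in> {1..m}" using part_pos[OF lam(1)] lam(2) by auto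
  qed
  have finR: "finite R" using Rm finite_subset by blast
  have "S \<noteq> {}"
  proof
    assume "S = {}" hence "card S = 0" by simp
    thus False using cS e S_def by simp
  qed
  then obtain a0 b0 where "(a0, b0) \<in> S" by auto
  hence "a0 \<in> R" unfolding S R_def by auto
  hence Rne: "R \<noteq> {}" by auto
  define a1 where "a1 = Min R"
  define a2 where "a2 = Max R"
  have a1R: "a1 \<in> R" and a2R: "a2 \<in> R" unfolding a1_def a2_def using finR Rne by auto
  have a12: "1 \<le> a1" "a1 \<le> a2" "a2 \<le> m" using a1R a2R Rm finR unfolding a1_def a2_def
    by (auto simp: R_def)
  have outR: "1 \<le> a \<Longrightarrow> a < a1 \<or> a2 < a \<Longrightarrow> part mu a = part lam a" for a
  proof -
    assume "1 \<le> a" "a < a1 \<or> a2 < a"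
    hence "a \<notin> R" unfolding a1_def a2_def using finR Rne by (auto dest: Min_le Max_ge)
    thus ?thesis using le[OF \<open>1 \<le> a\<close>] \<open>1 \<le> a\<close> unfolding R_def by auto
  qed
  have nodeR: "a \<in> R \<Longrightarrow> (a, part lam a) \<in> S" for a unfolding R_def S by auto
  have key: "part mu a + 1 = part lam (Suc a)" if aa: "a1 \<le> a" "a < a2" for a
  proof -
    have a1': "1 \<le> a" using aa a12 by simp
    have A: "part mu a + 1 \<ge> part lam (Suc a)"
    proof (rule ccontr)
      assume "\<not> ?thesis"
      hence h: "part mu a + 2 \<le> part lam (Suc a)" by simp
      let ?b = "part mu a + 1"
      have "part mu (Suc a) \<le> part mu a" using part_mono[OF mu a1'] by simp
      moreover have "part lam (Suc a) \<le> part lam a" using part_mono[OF lam(1) a1'] by simp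
      ultimately have "{(a, ?b), (a + 1, ?b), (a, ?b + 1), (a + 1, ?b + 1)} \<subseteq> S"
        using h a1' unfolding S by auto
      thus False using no22 S_def by blast
    qed
    have B: "part mu a < part lam (Suc a)"
    proof (rule ccontr)
      assume "\<not> ?thesis"
      hence h: "part lam (Suc a) \<le> part mu a" by simp
      have clos: "(Rel S)\<^sup>*\<^sup>* u v \<Longrightarrow> fst u \<le> a \<Longrightarrow> fst v \<le> a" for u v
      proof (induction rule: rtranclp_induct)
        case (step y z)
        obtain ya yb where y: "y = (ya, yb)" by (cases y)
        obtain za zb where z: "z = (za, zb)" by (cases z)
        have yS: "y \<in> S" and zS: "z \<in> S" and adj: "adjacent y z" using step(2) unfolding Rel_def by auto
        have "ya \<le> a" using step y by simp
        show ?case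
        proof (rule ccontr)
          assume "\<not> fst z \<le> a"
          hence "a < za" using z by simp
          hence "za = Suc ya" "zb = yb" "ya = a" using adj \<open>ya \<le> a\<close> unfolding adjacent_def y z by auto
          thus False using yS zS h unfolding y z S by auto
        qed
      qed simp
      have "(Rel S)\<^sup>*\<^sup>* (a1, part lam a1) (a2, part lam a2)"
        using con nodeR[OF a1R] nodeR[OF a2R] unfolding connected_Rel S_def by blast
      thus False using clos aa by fastforce
    qed
    show ?thesis using A B by simp
  qed
  let ?p = "bp m lam" and ?q = "bp m mu"
  have injp: "inj_on ?p {1..m}" using sdec_inj[OF sdec_bp[OF lam]] .
  have img: "?q ` {1..m} = insert (?q a2) (?p ` {1..m} - {?p a1})"
  proof (rule shift_image[OF injp a12])
    fix a assume "1 \<le> a" "a \<le> m" "a < a1 \<or> a2 < a"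
    thus "?q a = ?p a" using outR by (simp add: bp_def)
  next
    fix a assume "a1 \<le> a" "a < a2"
    thus "?q a = ?p (Suc a)" using key[of a] a12 by (simp add: bp_def)
  qed
  have bmu: "beta m mu = insert (?q a2) (beta m lam - {?p a1})" using img by (simp add: beta_bp)
  have x_in: "?p a1 \<in> beta m lam" using a12 by (auto simp: beta_bp)
  have fb: "finite (beta m lam)" by (rule finite_beta)
  have cl: "card (beta m lam) = m" using card_beta[OF lam] .
  have cm: "card (beta m mu) = m" using card_beta[OF mu lmu] .
  have notin: "?q a2 \<notin> beta m lam - {?p a1}"
  proof
    assume "?q a2 \<in> beta m lam - {?p a1}"
    hence "beta m mu = beta m lam - {?p a1}" using bmu by auto
    hence "card (beta m mu) = m - 1" using x_in cl fb by simp
    thus False using cm a12 by simp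
  qed
  have sums: "\<Sum>(beta m lam) = \<Sum>(beta m mu) + e"
    using sum_beta[OF lam(1) mu lam(2) lmu le] cS by simp
  have "\<Sum>(beta m mu) = ?q a2 + \<Sum>(beta m lam - {?p a1})" using bmu notin fb by simp
  moreover have "\<Sum>(beta m lam) = ?p a1 + \<Sum>(beta m lam - {?p a1})"
    using x_in fb by (simp add: sum.remove)
  ultimately have eq: "?p a1 = ?q a2 + e" using sums by simp
  hence "?q a2 \<noteq> ?p a1" using e by simp
  hence "?q a2 \<notin> beta m lam" using notin by auto
  thus ?thesis using eq x_in bmu mu lmu by (intro conjI exI[of _ "?p a1"]) auto
qed


lemma sdec_Suc:
  assumes "\<And>a. 1 \<le> a \<Longrightarrow> a < m \<Longrightarrow> q (Suc a) < q a"
  shows "sdec m q"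
  unfolding sdec_def
proof (intro allI impI)
  fix a a' :: nat assume a: "1 \<le> a" "a < a'" "a' \<le> m"
  from a(2,3) show "q a' < q a"
  proof (induction a' rule: less_induct)
    case (less k)
    show ?case
    proof (cases "k = Suc a")
      case True thus ?thesis using assms a less by auto
    next
      case False
      hence "a < k - 1" "k - 1 < k" using less by auto
      hence "q (k - 1) < q a" using less by auto
      moreover have "q k < q (k - 1)" using assms[of "k - 1"] less \<open>a < k - 1\<close> a by auto
      ultimately show ?thesis by simp
    qed
  qed
qed

lemma rtranclp_sym:
  assumes "\<And>x y. r x y \<Longrightarrow> r y x" "r\<^sup>*\<^sup>* x y"
  shows "r\<^sup>*\<^sup>* y x"
  using assms(2)
proof (induction rule: rtranclp_induct)
  case (step y z)
  thus ?case using assms(1) by (meson converse_rtranclp_into_rtranclp)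
qed simp

lemma Rel_sym: "Rel S x y \<Longrightarrow> Rel S y x"
  unfolding Rel_def adjacent_def by auto

lemma beta_rrh:
  assumes lam: "is_partition lam" "length lam \<le> m" and x: "x \<in> beta m lam" "e \<le> x"
    "x - e \<notin> beta m lam" and e: "0 < e"
  shows "\<exists>mu. remove_rim_hook e lam mu"
proof -
  let ?p = "bp m lam"
  have sp: "sdec m ?p" using sdec_bp[OF lam] .
  have psd: "1 \<le> a \<Longrightarrow> a < a' \<Longrightarrow> a' \<le> m \<Longrightarrow> ?p a' < ?p a" for a a'
    using sp unfolding sdec_def by blast
  have pmono: "1 \<le> a \<Longrightarrow> a \<le> a' \<Longrightarrow> a' \<le> m \<Longrightarrow> ?p a' \<le> ?p a" for a a'
    using psd by (cases "a = a'") (auto intro: less_imp_le)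
  obtain a1 where a1: "1 \<le> a1" "a1 \<le> m" "?p a1 = x" using x(1) unfolding beta_bp by auto
  define A where "A = {a \<in> {a1..m}. x - e < ?p a}"
  have finA: "finite A" unfolding A_def by auto
  have a1A: "a1 \<in> A" unfolding A_def using a1 e x(2) by auto
  define a2 where "a2 = Max A"
  have a2A: "a2 \<in> A" unfolding a2_def using finA a1A by (intro Max_in) auto
  have a12: "a1 \<le> a2" "a2 \<le> m" using a2A unfolding A_def by auto
  have pa2: "x - e < ?p a2" using a2A unfolding A_def by auto
  have inA: "a1 \<le> a \<Longrightarrow> a \<le> a2 \<Longrightarrow> x - e < ?p a" for a
    using pmono[of a a2] pa2 a1 a12 by fastforce
  have belowA: "?p a < x - e" if "a2 < a" "a \<le> m" for a
  proof -
    have "a \<notin> A" using that finA unfolding a2_def using Max_ge leD by blast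
    hence "?p a \<le> x - e" using that a12 unfolding A_def by auto
    moreover have "?p a \<noteq> x - e"
    proof
      assume "?p a = x - e"
      hence "x - e \<in> beta m lam" using that a1 a12 unfolding beta_bp
        by (metis atLeastAtMost_iff image_eqI le_trans less_imp_le_nat)
      thus False using x(3) by simp
    qed
    ultimately show ?thesis by simp
  qed
  define q where "q a = (if a1 \<le> a \<and> a < a2 then ?p (Suc a) else if a = a2 then x - e else ?p a)" for a
  have sq: "sdec m q"
  proof (rule sdec_Suc)
    fix a assume a: "1 \<le> a" "a < m"
    consider "Suc a < a1" | "Suc a = a1" | "a1 \<le> a \<and> Suc a < a2" | "a1 \<le> a \<and> Suc a = a2" | "a = a2" | "a2 < a"
      by linarith
    thus "q (Suc a) < q a"
    proof cases
      case 1 thus ?thesis using psd[of a "Suc a"] a a12 by (simp add: q_def)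
    next
      case 2
      show ?thesis
      proof (cases "a1 < a2")
        case True
        hence "q (Suc a) = ?p (Suc a1)" "q a = ?p a" using 2 by (auto simp: q_def)
        moreover have "?p (Suc a1) < ?p a1" using psd[of a1 "Suc a1"] True a12 a1 by simp
        moreover have "?p a1 < ?p a" using psd[of a a1] 2 a1 a by simp
        ultimately show ?thesis by simp
      next
        case False
        hence "q (Suc a) = x - e" "q a = ?p a" using 2 a12 by (auto simp: q_def)
        moreover have "?p a1 < ?p a" using psd[of a a1] 2 a1 a by simp
        ultimately show ?thesis using a1 e x(2) by simp
      qed
    next
      case 3 thus ?thesis using psd[of "Suc a" "Suc (Suc a)"] a a12 by (simp add: q_def)
    next
      case 4 thus ?thesis using pa2 by (simp add: q_def)
    next
      case 5 thus ?thesis using belowA[of "Suc a"] a a12 by (simp add: q_def)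
    next
      case 6 thus ?thesis using psd[of a "Suc a"] a a12 by (simp add: q_def)
    qed
  qed
  obtain mu where mu: "is_partition mu" "length mu \<le> m" "\<And>a. 1 \<le> a \<Longrightarrow> a \<le> m \<Longrightarrow> bp m mu a = q a"
    "beta m mu = q ` {1..m}"
    using sdec_partition[OF sq] by blast
  have out: "part mu a = part lam a" if "1 \<le> a" "a < a1 \<or> a2 < a" for a
  proof (cases "a \<le> m")
    case True
    hence "bp m mu a = ?p a" using mu(3)[of a] that a12 by (auto simp: q_def)
    thus ?thesis using True by (simp add: bp_def)
  next
    case False thus ?thesis using mu(2) lam(2) by (simp add: part_zero)
  qed
  have sh: "part mu a + 1 = part lam (Suc a)" if "a1 \<le> a" "a < a2" for a
  proof -
    have "bp m mu a = ?p (Suc a)" using mu(3)[of a] that a1 a12 by (auto simp: q_def)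
    thus ?thesis using that a12 by (simp add: bp_def)
  qed
  have inr: "part mu a < part lam a" if "a1 \<le> a" "a \<le> a2" for a
  proof -
    have "q a < ?p a"
    proof (cases "a < a2")
      case True thus ?thesis using psd[of a "Suc a"] that a1 a12 by (simp add: q_def)
    next
      case False thus ?thesis using pa2 that by (simp add: q_def)
    qed
    hence "bp m mu a < ?p a" using mu(3)[of a] that a1 a12 by auto
    thus ?thesis using that a12 by (simp add: bp_def)
  qed
  have le: "part mu a \<le> part lam a" if "1 \<le> a" for a
    using out[OF that] inr[of a] by (cases "a1 \<le> a \<and> a \<le> a2") (auto intro: less_imp_le)
  have sub: "dg mu \<subseteq> dg lam" using le by (auto simp: dg_part intro: order.trans)
  define S where "S = dg lam - dg mu"
  have S: "S = {(a, b). 1 \<le> a \<and> part mu a < b \<and> b \<le> part lam a}" unfolding S_def dg_diff ..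
  have rows: "a1 \<le> a \<and> a \<le> a2" if "(a, b) \<in> S" for a b
  proof (rule ccontr)
    assume "\<not> (a1 \<le> a \<and> a \<le> a2)"
    hence "part mu a = part lam a" using out[of a] that unfolding S by auto
    thus False using that unfolding S by auto
  qed
  have bmu: "beta m mu = insert (x - e) (beta m lam - {x})"
  proof -
    have "q ` {1..m} = insert (q a2) (?p ` {1..m} - {?p a1})"
    proof (rule shift_image[OF sdec_inj[OF sp] a1(1) a12])
      fix a assume "1 \<le> a" "a \<le> m" "a < a1 \<or> a2 < a"
      thus "q a = ?p a" using a12 by (auto simp: q_def)
    next
      fix a assume "a1 \<le> a" "a < a2"
      thus "q a = ?p (Suc a)" by (simp add: q_def)
    qed
    thus ?thesis using mu(4) a1 by (simp add: q_def beta_bp)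
  qed
  have fb: "finite (beta m lam)" by (rule finite_beta)
  have "\<Sum>(beta m lam) = \<Sum>(beta m mu) + card S"
    unfolding S_def using sum_beta[OF lam(1) mu(1) lam(2) mu(2) le] .
  moreover have "\<Sum>(beta m mu) = (x - e) + \<Sum>(beta m lam - {x})" using bmu fb x(3) by simp
  moreover have "\<Sum>(beta m lam) = x + \<Sum>(beta m lam - {x})" using x(1) fb by (simp add: sum.remove)
  ultimately have cS: "card S = e" using x(2) by simp
  have no22: "\<not> (\<exists>a b. {(a, b), (a + 1, b), (a, b + 1), (a + 1, b + 1)} \<subseteq> S)"
  proof
    assume "\<exists>a b. {(a, b), (a + 1, b), (a, b + 1), (a + 1, b + 1)} \<subseteq> S"
    then obtain a b where h: "(a, b) \<in> S" "(a + 1, b + 1) \<in> S" by auto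
    have "a1 \<le> a" "a < a2" using rows[OF h(1)] rows[OF h(2)] by auto
    hence "part mu a + 1 = part lam (Suc a)" using sh by simp
    thus False using h unfolding S by auto
  qed
  have rowpath: "(Rel S)\<^sup>*\<^sup>* (a, b) (a, part mu a + 1)" if "(a, b) \<in> S" for a b
  proof -
    have "\<forall>b. (a, b) \<in> S \<longrightarrow> b - (part mu a + 1) = k \<longrightarrow> (Rel S)\<^sup>*\<^sup>* (a, b) (a, part mu a + 1)" for k
    proof (induction k)
      case 0 show ?case
      proof (intro allI impI)
        fix b assume "(a, b) \<in> S" "b - (part mu a + 1) = 0"
        hence "b = part mu a + 1" unfolding S by auto
        thus "(Rel S)\<^sup>*\<^sup>* (a, b) (a, part mu a + 1)" by simp
      qed
    next
      case (Suc k)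
      show ?case
      proof (intro allI impI)
        fix b assume b: "(a, b) \<in> S" "b - (part mu a + 1) = Suc k"
        hence b1: "(a, b - 1) \<in> S" unfolding S by auto
        have "Rel S (a, b) (a, b - 1)" using b b1 unfolding Rel_def adjacent_def by auto
        moreover have "(Rel S)\<^sup>*\<^sup>* (a, b - 1) (a, part mu a + 1)" using Suc b1 b by auto
        ultimately show "(Rel S)\<^sup>*\<^sup>* (a, b) (a, part mu a + 1)" by (rule converse_rtranclp_into_rtranclp)
      qed
    qed
    thus ?thesis using that by blast
  qed
  define z0 where "z0 = (a2, part mu a2 + 1)"
  have colpath: "(Rel S)\<^sup>*\<^sup>* (a, part mu a + 1) z0" if "a1 \<le> a" "a \<le> a2" for a
    using that
  proof (induction "a2 - a" arbitrary: a)
    case 0 thus ?case by (simp add: z0_def)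
  next
    case (Suc k)
    hence aa: "a < a2" by simp
    have eq: "part mu a + 1 = part lam (Suc a)" using sh Suc aa by simp
    have n1: "(a, part mu a + 1) \<in> S" using inr[of a] Suc a1 a12 unfolding S by auto
    have n2: "(Suc a, part lam (Suc a)) \<in> S" using inr[of "Suc a"] Suc aa a1 unfolding S by auto
    have "Rel S (a, part mu a + 1) (Suc a, part lam (Suc a))"
      using n1 n2 eq unfolding Rel_def adjacent_def by auto
    moreover have "(Rel S)\<^sup>*\<^sup>* (Suc a, part lam (Suc a)) (Suc a, part mu (Suc a) + 1)"
      using rowpath[OF n2] .
    moreover have "(Rel S)\<^sup>*\<^sup>* (Suc a, part mu (Suc a) + 1) z0" using Suc aa by auto
    ultimately show ?case by (meson converse_rtranclp_into_rtranclp rtranclp_trans)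
  qed
  have toz: "(Rel S)\<^sup>*\<^sup>* u z0" if "u \<in> S" for u
  proof -
    obtain a b where u: "u = (a, b)" by (cases u)
    thus ?thesis using rowpath[of a b] colpath[of a] rows[of a b] that
      by (meson rtranclp_trans)
  qed
  have con: "connected_nodes S"
    unfolding connected_Rel
  proof (intro ballI)
    fix u v assume "u \<in> S" "v \<in> S"
    thus "(Rel S)\<^sup>*\<^sup>* u v" using toz[of u] rtranclp_sym[OF Rel_sym toz[of v]]
      by (meson rtranclp_trans)
  qed
  have "remove_rim_hook e lam mu"
    unfolding remove_rim_hook_def using mu(1) sub cS con no22 S_def by simp
  thus ?thesis by blast
qed

lemma core_flush:
  assumes "is_partition k" "length k \<le> m" "\<not> (\<exists>mu. remove_rim_hook e k mu)" "0 < e"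
    "x \<in> beta m k" "e \<le> x"
  shows "x - e \<in> beta m k"
  using beta_rrh[OF assms(1,2,5,6) _ assms(4)] assms(3) by blast


definition rc :: "nat \<Rightarrow> nat set \<Rightarrow> nat \<Rightarrow> nat" where
  "rc e X r = card {x \<in> X. x mod e = r}"

definition flush :: "nat \<Rightarrow> nat set \<Rightarrow> bool" where
  "flush e X \<longleftrightarrow> (\<forall>x\<in>X. e \<le> x \<longrightarrow> x - e \<in> X)"

lemma move_card:
  assumes "finite S" "z \<in> S" "w \<notin> S"
  shows "int (card {x \<in> insert w (S - {z}). P x}) =
         int (card {x \<in> S. P x}) - (if P z then 1 else 0) + (if P w then 1 else 0)"
proof -
  have f: "finite {x \<in> S. P x}" using assms(1) by simp
  have "{x \<in> insert w (S - {z}). P x} = (if P w then insert w else id) ({x \<in> S. P x} - {z})"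
    by auto
  moreover have "w \<notin> {x \<in> S. P x} - {z}" using assms by auto
  moreover have "card ({x \<in> S. P x} - {z}) = card {x \<in> S. P x} - (if P z then 1 else 0)"
    using assms f by auto
  moreover have "P z \<Longrightarrow> 1 \<le> card {x \<in> S. P x}"
  proof -
    assume "P z"
    hence "z \<in> {x \<in> S. P x}" using assms by simp
    hence "card {x \<in> S. P x} \<noteq> 0" using f by (auto simp: card_eq_0_iff)
    thus ?thesis by simp
  qed
  ultimately show ?thesis using f by (auto simp: of_nat_diff)
qed

lemma rrh_rc:
  assumes "is_partition lam" "length lam \<le> m" "remove_rim_hook e lam mu" "0 < e"
  shows "is_partition mu \<and> length mu \<le> m \<and> rc e (beta m mu) = rc e (beta m lam)"
proof -
  obtain x where x: "x \<in> beta m lam" "e \<le> x" "x - e \<notin> beta m lam"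
    "beta m mu = insert (x - e) (beta m lam - {x})" and mu: "is_partition mu" "length mu \<le> m"
    using rrh_beta[OF assms] by blast
  have "rc e (beta m mu) r = rc e (beta m lam) r" for r
  proof -
    have "(x - e) mod e = x mod e" using x(2) by (simp add: le_mod_geq)
    thus ?thesis using move_card[OF finite_beta x(1) x(3), of "\<lambda>y. y mod e = r"] x(4)
      unfolding rc_def by simp
  qed
  thus ?thesis using mu by auto
qed

lemma rtrancl_rc:
  assumes "(remove_rim_hook e)\<^sup>*\<^sup>* L k" "is_partition L" "length L \<le> m" "0 < e"
  shows "is_partition k \<and> length k \<le> m \<and> rc e (beta m k) = rc e (beta m L)"
  using assms(1)
proof (induction rule: rtranclp_induct)
  case (step y z)
  thus ?case using rrh_rc[of y m e z] assms(4) by auto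
qed (use assms in auto)

lemma flush_down:
  assumes "flush e X" "y \<in> X" "e * j \<le> y"
  shows "y - e * j \<in> X"
  using assms(3)
proof (induction j)
  case (Suc j)
  hence "y - e * j \<in> X" by simp
  moreover have "e \<le> y - e * j" using Suc.prems by simp
  ultimately have "y - e * j - e \<in> X" using assms(1) unfolding flush_def by blast
  thus ?case by (simp add: diff_diff_add add.commute)
qed (simp add: assms(2))

lemma downclosed_card:
  assumes "finite K" "\<And>k k'. k \<in> K \<Longrightarrow> k' < k \<Longrightarrow> k' \<in> K"
  shows "K = {..<card K}"
proof (rule set_eqI, rule iffI)
  fix k assume "k \<in> K"
  hence "{..k} \<subseteq> K" using assms(2) by (auto simp: le_less)
  hence "card {..k} \<le> card K" using assms(1) by (intro card_mono)
  thus "k \<in> {..<card K}" by simp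
next
  fix k assume k: "k \<in> {..<card K}"
  show "k \<in> K"
  proof (rule ccontr)
    assume "k \<notin> K"
    hence "K \<subseteq> {..<k}" using assms(2) by (metis lessThan_iff linorder_neqE_nat subsetI)
    hence "card K \<le> k" using card_mono[of "{..<k}" K] by simp
    thus False using k by simp
  qed
qed

lemma flush_char:
  assumes "finite X" "flush e X" "0 < e"
  shows "x \<in> X \<longleftrightarrow> x div e < rc e X (x mod e)"
proof -
  define C where "C = {y \<in> X. y mod e = x mod e}"
  define K where "K = (\<lambda>y. y div e) ` C"
  have injC: "inj_on (\<lambda>y. y div e) C"
  proof (rule inj_onI)
    fix y1 y2 assume "y1 \<in> C" "y2 \<in> C" "y1 div e = y2 div e"
    hence "y1 mod e = y2 mod e" "y1 div e = y2 div e" unfolding C_def by auto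
    note eqs = this
    have "y1 = y1 div e * e + y1 mod e" by simp
    also have "\<dots> = y2 div e * e + y2 mod e" using eqs by simp
    also have "\<dots> = y2" by simp
    finally show "y1 = y2" .
  qed
  have cK: "card K = rc e X (x mod e)" unfolding K_def rc_def C_def[symmetric] using card_image[OF injC] .
  have finK: "finite K" unfolding K_def C_def using assms(1) by simp
  have dc: "k' \<in> K" if kK: "k \<in> K" and kk: "k' < k" for k k'
  proof -
    obtain y where y: "y \<in> C" "k = y div e" using kK unfolding K_def by blast
    have "e * (k - k') \<le> e * k" by (intro mult_le_mono2) simp
    also have "e * k \<le> y" using y(2) times_div_less_eq_dividend[of e y] by simp
    finally have "e * (k - k') \<le> y" .
    moreover have "y \<in> X" using y(1) C_def by simp
    ultimately have "y - e * (k - k') \<in> X" using flush_down[OF assms(2)] by simp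
    moreover have "y - e * (k - k') = x mod e + e * k'"
    proof -
      have ym: "y mod e = x mod e" using y C_def by simp
      have "y = y mod e + e * (y div e)" by simp
      also have "\<dots> = x mod e + e * k" using ym y(2) by simp
      finally have "y = x mod e + e * k" .
      thus ?thesis using kk by (simp add: diff_mult_distrib2)
    qed
    ultimately have "x mod e + e * k' \<in> C" unfolding C_def by simp
    moreover have "(x mod e + e * k') div e = k'" using assms(3) by simp
    ultimately show ?thesis unfolding K_def by force
  qed
  have Keq: "K = {..<card K}" using downclosed_card[OF finK dc] .
  have "x \<in> X \<longleftrightarrow> x div e \<in> K"
  proof
    assume "x \<in> X" hence "x \<in> C" unfolding C_def by simp
    thus "x div e \<in> K" unfolding K_def by (rule imageI)
  next
    assume "x div e \<in> K"
    then obtain y where y: "y \<in> C" "y div e = x div e" unfolding K_def by auto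
    hence "y \<in> X" "y mod e = x mod e" unfolding C_def by auto
    moreover have "y = x"
    proof -
      have "y = y div e * e + y mod e" by simp
      also have "\<dots> = x div e * e + x mod e" using y(2) \<open>y mod e = x mod e\<close> by simp
      also have "\<dots> = x" by simp
      finally show ?thesis .
    qed
    ultimately show "x \<in> X" by simp
  qed
  also have "\<dots> \<longleftrightarrow> x div e < card K" by (subst Keq) simp
  also have "\<dots> \<longleftrightarrow> x div e < rc e X (x mod e)" using cK by simp
  finally show ?thesis .
qed

lemma flush_eq:
  assumes "finite X" "finite Y" "flush e X" "flush e Y" "0 < e" "rc e X = rc e Y"
  shows "X = Y"
  using flush_char[OF assms(1,3,5)] flush_char[OF assms(2,4,5)] assms(6) by auto

lemma core_exists:
  assumes "is_partition L" "0 < e"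
  shows "\<exists>k. (remove_rim_hook e)\<^sup>*\<^sup>* L k \<and> \<not> (\<exists>mu. remove_rim_hook e k mu)"
  using assms(1)
proof (induction "card (dg L)" arbitrary: L rule: less_induct)
  case less
  show ?case
  proof (cases "\<exists>mu. remove_rim_hook e L mu")
    case True
    then obtain mu where r: "remove_rim_hook e L mu" by blast
    hence mu: "is_partition mu" "dg mu \<subseteq> dg L" "card (dg L - dg mu) = e"
      unfolding remove_rim_hook_def by auto
    have "card (dg L - dg mu) = card (dg L) - card (dg mu)"
      using mu(2) finite_dg by (simp add: card_Diff_subset finite_subset)
    moreover have "card (dg mu) \<le> card (dg L)" using mu(2) finite_dg by (intro card_mono)
    ultimately have "card (dg mu) < card (dg L)" using mu(3) assms(2) by linarith
    then obtain k where "(remove_rim_hook e)\<^sup>*\<^sup>* mu k" "\<not> (\<exists>mu. remove_rim_hook e k mu)"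
      using less mu(1) by blast
    thus ?thesis using r by (meson converse_rtranclp_into_rtranclp)
  qed blast
qed

lemma core_unique:
  assumes "is_partition L" "0 < e" "is_ecore_of e L k1" "is_ecore_of e L k2"
  shows "k1 = k2"
proof -
  let ?m = "length L"
  have 1: "is_partition k1 \<and> length k1 \<le> ?m \<and> rc e (beta ?m k1) = rc e (beta ?m L)"
    using rtrancl_rc[of e L k1 ?m] assms unfolding is_ecore_of_def by auto
  have 2: "is_partition k2 \<and> length k2 \<le> ?m \<and> rc e (beta ?m k2) = rc e (beta ?m L)"
    using rtrancl_rc[of e L k2 ?m] assms unfolding is_ecore_of_def by auto
  have f1: "flush e (beta ?m k1)" unfolding flush_def
    using core_flush[of k1 ?m e] 1 assms(2,3) unfolding is_ecore_of_def by blast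
  have f2: "flush e (beta ?m k2)" unfolding flush_def
    using core_flush[of k2 ?m e] 2 assms(2,4) unfolding is_ecore_of_def by blast
  have "beta ?m k1 = beta ?m k2" using flush_eq[OF finite_beta finite_beta f1 f2 assms(2)] 1 2 by simp
  thus ?thesis using beta_inj 1 2 by blast
qed

lemma ecore_props:
  assumes "is_partition L" "0 < e"
  shows "is_ecore_of e L (ecore e L)"
proof -
  have "\<exists>!k. is_ecore_of e L k" using core_exists[OF assms] core_unique[OF assms]
    unfolding is_ecore_of_def by blast
  thus ?thesis unfolding ecore_def by (rule theI')
qed

lemma ecore_rc:
  assumes "is_partition L" "0 < e" "length L \<le> m"
  shows "is_partition (ecore e L) \<and> length (ecore e L) \<le> m \<and> flush e (beta m (ecore e L)) \<and>
         rc e (beta m (ecore e L)) = rc e (beta m L)"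
proof -
  have E: "is_ecore_of e L (ecore e L)" using ecore_props[OF assms(1,2)] .
  have 1: "is_partition (ecore e L) \<and> length (ecore e L) \<le> m \<and> rc e (beta m (ecore e L)) = rc e (beta m L)"
    using rtrancl_rc[of e L "ecore e L" m] assms E unfolding is_ecore_of_def by auto
  have "flush e (beta m (ecore e L))" unfolding flush_def
    using core_flush[of "ecore e L" m e] 1 assms(2) E unfolding is_ecore_of_def by blast
  thus ?thesis using 1 by simp
qed

lemma ecore_char:
  assumes "is_partition L" "0 < e" "length L \<le> m" "is_partition k" "length k \<le> m"
    "flush e (beta m k)" "rc e (beta m k) = rc e (beta m L)"
  shows "ecore e L = k"
proof -
  have 1: "is_partition (ecore e L) \<and> length (ecore e L) \<le> m \<and> flush e (beta m (ecore e L)) \<and>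
         rc e (beta m (ecore e L)) = rc e (beta m L)" using ecore_rc[OF assms(1-3)] .
  have "beta m (ecore e L) = beta m k"
    using flush_eq[OF finite_beta finite_beta _ assms(6) assms(2)] 1 assms(7) by simp
  thus ?thesis using beta_inj 1 assms(4,5) by blast
qed


lemma sorted_wrt_unique:
  assumes asym: "\<And>x y. R x y \<Longrightarrow> \<not> R y x"
  shows "sorted_wrt R xs \<Longrightarrow> sorted_wrt R ys \<Longrightarrow> set xs = set ys \<Longrightarrow> distinct xs \<Longrightarrow> distinct ys \<Longrightarrow> xs = ys"
proof (induction xs arbitrary: ys)
  case Nil thus ?case by simp
next
  case (Cons x xs)
  then obtain y ys' where ys: "ys = y # ys'" by (cases ys) auto
  have xy: "x = y"
  proof (rule ccontr)
    assume "x \<noteq> y"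
    hence "x \<in> set ys'" "y \<in> set xs" using Cons.prems(3) ys by auto
    hence "R y x" "R x y" using Cons.prems(1,2) ys by auto
    thus False using asym by blast
  qed
  have "set xs = set ys'" using Cons.prems(3-5) ys xy by auto
  thus ?case using Cons ys xy by simp
qed

lemma sig_word_unique:
  assumes "is_sig_word e c i nu w1" "is_sig_word e c i nu w2"
  shows "w1 = w2"
proof -
  have "\<And>x y. node_less c (snd x) (snd y) \<Longrightarrow> \<not> node_less c (snd y) (snd x)"
    unfolding node_less_def by auto
  thus ?thesis using sorted_wrt_unique[of "\<lambda>x y. node_less c (snd x) (snd y)" w1 w2] assms
    unfolding is_sig_word_def by blast
qed

lemma cancelRA_length: "cancelRA w w' \<Longrightarrow> length w = length w' + 2"
  unfolding cancelRA_def by auto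

lemma cancelRA_set: "cancelRA w w' \<Longrightarrow> set w' \<subseteq> set w"
  unfolding cancelRA_def by auto

lemma cancelRA_rtc_set: "cancelRA\<^sup>*\<^sup>* w w' \<Longrightarrow> set w' \<subseteq> set w"
  by (induction rule: rtranclp_induct) (auto dest: cancelRA_set)

lemma RA_free_iff: "RA_free w \<longleftrightarrow> \<not> (\<exists>w'. cancelRA w w')"
  unfolding RA_free_def cancelRA_def by auto

lemma local_conf_aux:
  assumes "u1 @ (LR, x1) # (LA, y1) # v1 = u2 @ (LR, x2) # (LA, y2) # v2"
    "length u1 < length u2"
  shows "\<exists>w3. cancelRA (u1 @ v1) w3 \<and> cancelRA (u2 @ v2) w3"
proof -
  obtain us where us: "u1 @ us = u2" "(LR, x1) # (LA, y1) # v1 = us @ (LR, x2) # (LA, y2) # v2"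
    using assms append_eq_append_conv2[of u1 "(LR, x1) # (LA, y1) # v1" u2 "(LR, x2) # (LA, y2) # v2"]
    by auto
  consider "us = []" | z where "us = [z]" | z1 z2 m where "us = z1 # z2 # m"
    by (metis list.exhaust)
  thus ?thesis
  proof cases
    case 1 thus ?thesis using us assms(2) by simp
  next
    case 2 thus ?thesis using us by simp
  next
    case 3
    hence m: "z1 = (LR, x1)" "z2 = (LA, y1)" "v1 = m @ (LR, x2) # (LA, y2) # v2" using us by auto
    have "cancelRA (u1 @ v1) (u1 @ m @ v2)" unfolding cancelRA_def m
      by (rule exI[of _ "u1 @ m"], rule exI[of _ v2]) auto
    moreover have "cancelRA (u2 @ v2) (u1 @ m @ v2)" unfolding cancelRA_def using us(1) 3 m
      by (intro exI[of _ u1] exI[of _ "m @ v2"]) auto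
    ultimately show ?thesis by blast
  qed
qed

lemma local_conf:
  assumes "cancelRA w w1" "cancelRA w w2"
  shows "w1 = w2 \<or> (\<exists>w3. cancelRA w1 w3 \<and> cancelRA w2 w3)"
proof -
  obtain u1 v1 x1 y1 where o1: "w = u1 @ (LR, x1) # (LA, y1) # v1" "w1 = u1 @ v1"
    using assms(1) unfolding cancelRA_def by blast
  obtain u2 v2 x2 y2 where o2: "w = u2 @ (LR, x2) # (LA, y2) # v2" "w2 = u2 @ v2"
    using assms(2) unfolding cancelRA_def by blast
  consider "length u1 = length u2" | "length u1 < length u2" | "length u2 < length u1" by linarith
  thus ?thesis
  proof cases
    case 1
    have "u1 @ ((LR, x1) # (LA, y1) # v1) = u2 @ ((LR, x2) # (LA, y2) # v2)" using o1 o2 by simp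
    hence "u1 = u2 \<and> (LR, x1) # (LA, y1) # v1 = (LR, x2) # (LA, y2) # v2"
      using append_eq_append_conv[of u1 u2] \<open>length u1 = length u2\<close> by blast
    thus ?thesis using o1 o2 by simp
  next
    case 2 thus ?thesis using local_conf_aux[of u1 x1 y1 v1 u2 x2 y2 v2] o1 o2 by auto
  next
    case 3 thus ?thesis using local_conf_aux[of u2 x2 y2 v2 u1 x1 y1 v1] o1 o2 by auto
  qed
qed

lemma nf_exists: "\<exists>w'. cancelRA\<^sup>*\<^sup>* w w' \<and> RA_free w'"
proof (induction "length w" arbitrary: w rule: less_induct)
  case less
  show ?case
  proof (cases "RA_free w")
    case False
    then obtain w1 where "cancelRA w w1" using RA_free_iff by blast
    moreover hence "length w1 < length w" using cancelRA_length by fastforce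
    ultimately show ?thesis using less by (meson converse_rtranclp_into_rtranclp)
  qed blast
qed

lemma nf_self: "RA_free w \<Longrightarrow> cancelRA\<^sup>*\<^sup>* w w' \<Longrightarrow> w' = w"
  by (erule converse_rtranclpE) (auto simp: RA_free_iff)

lemma nf_unique:
  "cancelRA\<^sup>*\<^sup>* w w1 \<Longrightarrow> RA_free w1 \<Longrightarrow> cancelRA\<^sup>*\<^sup>* w w2 \<Longrightarrow> RA_free w2 \<Longrightarrow> w1 = w2"
proof (induction "length w" arbitrary: w w1 w2 rule: less_induct)
  case less
  show ?case
  proof (cases "RA_free w")
    case True thus ?thesis using nf_self less.prems by metis
  next
    case False
    obtain a1 where a1: "cancelRA w a1" "cancelRA\<^sup>*\<^sup>* a1 w1"
      using less.prems(1,2) False by (metis converse_rtranclpE)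
    obtain a2 where a2: "cancelRA w a2" "cancelRA\<^sup>*\<^sup>* a2 w2"
      using less.prems(3,4) False by (metis converse_rtranclpE)
    have l1: "length a1 < length w" using a1 cancelRA_length by fastforce
    have l2: "length a2 < length w" using a2 cancelRA_length by fastforce
    from local_conf[OF a1(1) a2(1)] show ?thesis
    proof
      assume "a1 = a2" thus ?thesis using less.hyps[OF l1] a1 a2 less.prems by blast
    next
      assume "\<exists>w3. cancelRA a1 w3 \<and> cancelRA a2 w3"
      then obtain w3 where w3: "cancelRA a1 w3" "cancelRA a2 w3" by blast
      obtain n3 where n3: "cancelRA\<^sup>*\<^sup>* w3 n3" "RA_free n3" using nf_exists by blast
      have "w1 = n3" using less.hyps[OF l1, of w1 n3] a1 less.prems(2) n3 w3(1)
        by (meson converse_rtranclp_into_rtranclp)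
      moreover have "w2 = n3" using less.hyps[OF l2, of w2 n3] a2 less.prems(4) n3 w3(2)
        by (meson converse_rtranclp_into_rtranclp)
      ultimately show ?thesis by simp
    qed
  qed
qed

lemma last_A_unique:
  assumes "u1 @ (LA, g1) # v1 = u2 @ (LA, g2) # v2"
    "\<forall>z\<in>set v1. fst z = LR" "\<forall>z\<in>set v2. fst z = LR"
  shows "g1 = g2"
proof -
  let ?P = "\<lambda>z. fst z = LR"
  have a: "dropWhile ?P (rev v1 @ ((LA, g1) # rev u1)) = dropWhile ?P ((LA, g1) # rev u1)"
    by (rule dropWhile_append2) (use assms(2) in auto)
  have b: "dropWhile ?P (rev v2 @ ((LA, g2) # rev u2)) = dropWhile ?P ((LA, g2) # rev u2)"
    by (rule dropWhile_append2) (use assms(3) in auto)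
  have "rev v1 @ ((LA, g1) # rev u1) = rev v2 @ ((LA, g2) # rev u2)"
    using arg_cong[OF assms(1), of rev] by simp
  hence "dropWhile ?P ((LA, g1) # rev u1) = dropWhile ?P ((LA, g2) # rev u2)" using a b by simp
  thus ?thesis by simp
qed

lemma good_unique:
  assumes "good_addable e c i nu g1" "good_addable e c i nu g2"
  shows "g1 = g2"
proof -
  obtain w w' u v where 1: "is_sig_word e c i nu w" "cancelRA\<^sup>*\<^sup>* w w'" "RA_free w'"
    "w' = u @ (LA, g1) # v" "\<forall>z \<in> set v. fst z = LR"
    using assms(1) unfolding good_addable_def by blast
  obtain ww ww' uu vv where 2: "is_sig_word e c i nu ww" "cancelRA\<^sup>*\<^sup>* ww ww'" "RA_free ww'"
    "ww' = uu @ (LA, g2) # vv" "\<forall>z \<in> set vv. fst z = LR"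
    using assms(2) unfolding good_addable_def by blast
  have "w = ww" using sig_word_unique 1 2 by blast
  hence "w' = ww'" using nf_unique 1 2 by blast
  thus ?thesis using last_A_unique 1 2 by metis
qed

lemma good_props:
  assumes "good_addable e c i nu g"
  shows "addable_node nu g \<and> residue e c g = int i"
proof -
  obtain w w' u v where 1: "is_sig_word e c i nu w" "cancelRA\<^sup>*\<^sup>* w w'"
    "w' = u @ (LA, g) # v"
    using assms unfolding good_addable_def by blast
  have "(LA, g) \<in> set w" using cancelRA_rtc_set[OF 1(2)] 1(3) by auto
  hence "(LA, g) \<in> sig_set e c i nu" using 1(1) unfolding is_sig_word_def by simp
  thus ?thesis unfolding sig_set_def by auto
qed

lemma ftilde_Some:
  assumes "ftilde e c i mu = Some nu"
  shows "\<exists>g. addable_node mu g \<and> residue e c g = int i \<and> nu = add_node mu g"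
proof -
  have ex: "\<exists>g. good_addable e c i mu g" using assms unfolding ftilde_def by (auto split: if_splits)
  hence nu: "nu = add_node mu (THE g. good_addable e c i mu g)" using assms unfolding ftilde_def by auto
  have "good_addable e c i mu (THE g. good_addable e c i mu g)"
    using ex good_unique by (metis theI)
  thus ?thesis using good_props nu by blast
qed

lemma dg_inj:
  assumes "is_partition l1" "is_partition l2" "dg l1 = dg l2"
  shows "l1 = l2"
proof (rule part_eq[OF assms(1,2)])
  fix a :: nat assume "1 \<le> a"
  thus "part l1 a = part l2 a"
    using dg_sub_part[OF assms(1), of l2 a] dg_sub_part[OF assms(2), of l1 a] assms(3) by simp
qed

lemma add_node_part:
  assumes lam: "is_partition lam" and ad: "addable lam (a, b)"
  shows "is_partition (part_of_dg (dg lam \<union> {(a, b)})) \<and>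
         b = part lam a + 1 \<and> 1 \<le> a \<and>
         (\<forall>a'. 1 \<le> a' \<longrightarrow> part (part_of_dg (dg lam \<union> {(a, b)})) a' = (if a' = a then part lam a + 1 else part lam a'))"
proof -
  have a1: "1 \<le> a" "1 \<le> b" "(a, b) \<notin> dg lam" "a = 1 \<or> (a - 1, b) \<in> dg lam" "b = 1 \<or> (a, b - 1) \<in> dg lam"
    using ad unfolding addable_def by auto
  have bb: "b = part lam a + 1" using a1 unfolding dg_part by auto
  have prev: "a \<noteq> 1 \<Longrightarrow> part lam a + 1 \<le> part lam (a - 1)" using a1 bb unfolding dg_part by auto
  define f where "f a' = (if a' = a then part lam a + 1 else part lam a')" for a'
  have anti: "f a'' \<le> f a'" if "1 \<le> a'" "a' \<le> a''" for a' a''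
  proof -
    have pm: "part lam a'' \<le> part lam a'" using part_mono[OF lam that] .
    consider "a' = a" | "a'' = a" "a' \<noteq> a" | "a' \<noteq> a" "a'' \<noteq> a" by blast
    thus ?thesis
    proof cases
      case 1 thus ?thesis using pm by (simp add: f_def)
    next
      case 2
      hence "a' \<le> a - 1" "1 \<le> a - 1" "a \<noteq> 1" using that by auto
      hence "part lam (a - 1) \<le> part lam a'" using part_mono[OF lam, of a' "a - 1"] that by simp
      thus ?thesis using 2 prev \<open>a \<noteq> 1\<close> by (simp add: f_def)
    qed (use pm in \<open>simp add: f_def\<close>)
  qed
  have fin: "f a' = 0" if "length lam + 1 < a'" for a'
  proof -
    have "a \<le> length lam + 1"
    proof (rule ccontr)
      assume "\<not> ?thesis"
      hence "a \<noteq> 1" "length lam < a - 1" by auto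
      hence "part lam (a - 1) = 0" by (simp add: part_zero)
      thus False using prev \<open>a \<noteq> 1\<close> by simp
    qed
    thus ?thesis using that by (simp add: f_def part_zero)
  qed
  obtain l where l: "is_partition l" "\<And>a'. 1 \<le> a' \<Longrightarrow> part l a' = f a'"
    using mk_partition[of f "length lam + 1"] anti fin by blast
  have dgl: "dg l = dg lam \<union> {(a, b)}"
    unfolding dg_part using l(2) bb a1(1) by (auto simp: f_def le_Suc_eq split: if_splits)
  have "part_of_dg (dg lam \<union> {(a, b)}) = l" unfolding part_of_dg_def
  proof (rule the_equality)
    show "is_partition l \<and> dg l = dg lam \<union> {(a, b)}" using l(1) dgl by simp
  next
    fix l'' assume "is_partition l'' \<and> dg l'' = dg lam \<union> {(a, b)}"
    thus "l'' = l" using dg_inj[of l'' l] l(1) dgl by simp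
  qed
  thus ?thesis using l bb a1 by (simp add: f_def)
qed

lemma add_node_beta:
  assumes lam: "is_partition lam" and ad: "addable lam (a, b)"
    and l': "l' = part_of_dg (dg lam \<union> {(a, b)})" and k: "length l' \<le> k"
  shows "is_partition l' \<and> length lam \<le> k \<and> a \<le> k \<and> 1 \<le> a \<and> b = part lam a + 1 \<and> bp k lam a \<in> beta k lam \<and>
         Suc (bp k lam a) \<notin> beta k lam \<and>
         beta k l' = insert (Suc (bp k lam a)) (beta k lam - {bp k lam a})"
proof -
  have P: "is_partition l'" "b = part lam a + 1" "1 \<le> a"
    "\<And>a'. 1 \<le> a' \<Longrightarrow> part l' a' = (if a' = a then part lam a + 1 else part lam a')"
    using add_node_part[OF lam ad] l' by auto
  have ak: "a \<le> k" using P(4)[of a] P(3) part_pos[OF P(1), of a] k by auto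
  have lk: "length lam \<le> k"
  proof (rule ccontr)
    assume "\<not> ?thesis"
    hence "0 < part lam (length lam)" "k < length lam" using part_pos[OF lam] by auto
    moreover hence "0 < part l' (length lam)" using P(4)[of "length lam"] by (auto split: if_splits)
    ultimately show False using k part_pos[OF P(1)] by auto
  qed
  let ?p = "bp k lam" and ?q = "bp k l'"
  have injp: "inj_on ?p {1..k}" using sdec_inj[OF sdec_bp[OF lam lk]] .
  have injq: "inj_on ?q {1..k}" using sdec_inj[OF sdec_bp[OF P(1) k]] .
  have qa: "?q a = Suc (?p a)" using P(4)[of a] P(3) ak by (simp add: bp_def)
  have qo: "a' \<noteq> a \<Longrightarrow> 1 \<le> a' \<Longrightarrow> ?q a' = ?p a'" for a' using P(4)[of a'] by (simp add: bp_def)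
  have pin: "?p a \<in> beta k lam" using ak P(3) by (auto simp: beta_bp)
  have nin: "Suc (?p a) \<notin> beta k lam"
  proof
    assume "Suc (?p a) \<in> beta k lam"
    then obtain c where c: "c \<in> {1..k}" "?p c = Suc (?p a)" by (auto simp: beta_bp)
    hence "c \<noteq> a" by auto
    hence "?q c = ?q a" using qo[of c] c qa by auto
    moreover have ak': "a \<in> {1..k}" using ak P(3) by simp
    ultimately have "c = a" using inj_onD[OF injq _ c(1) ak'] by blast
    thus False using \<open>c \<noteq> a\<close> by simp
  qed
  have "beta k l' = insert (Suc (?p a)) (beta k lam - {?p a})"
  proof (rule set_eqI, rule iffI)
    fix y assume "y \<in> beta k l'"
    then obtain c where c: "c \<in> {1..k}" "y = ?q c" by (auto simp: beta_bp)
    show "y \<in> insert (Suc (?p a)) (beta k lam - {?p a})"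
    proof (cases "c = a")
      case True thus ?thesis using c qa by simp
    next
      case False
      have ya: "y = ?p c" using c qo[of c] False by simp
      have "?p c \<noteq> ?p a"
      proof
        assume pe: "?p c = ?p a"
        have ak': "a \<in> {1..k}" using ak P(3) by simp
        have "c = a" by (rule inj_onD[OF injp pe c(1) ak'])
        thus False using False by simp
      qed
      moreover have "?p c \<in> ?p ` {1..k}" using c(1) by blast
      ultimately show ?thesis using ya unfolding beta_bp by simp
    qed
  next
    fix y assume y: "y \<in> insert (Suc (?p a)) (beta k lam - {?p a})"
    show "y \<in> beta k l'"
    proof (cases "y = Suc (?p a)")
      case True
      have "a \<in> {1..k}" using ak P(3) by simp
      hence "?q a \<in> ?q ` {1..k}" by blast
      thus ?thesis using True qa unfolding beta_bp by simp
    next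
      case False
      hence y2: "y \<in> ?p ` {1..k}" "y \<noteq> ?p a" using y unfolding beta_bp by auto
      then obtain c where c: "c \<in> {1..k}" "y = ?p c" by blast
      have "c \<noteq> a" using y2(2) c(2) by metis
      moreover have "1 \<le> c" using c(1) by simp
      ultimately have "?q c = ?p c" by (rule qo)
      hence "y = ?q c" using c(2) by (simp only:)
      moreover have "?q c \<in> ?q ` {1..k}" using c(1) by blast
      ultimately show ?thesis unfolding beta_bp by simp
    qed
  qed
  thus ?thesis using P(1,2,3) ak lk pin nin by blast
qed


definition IL :: "nat set \<Rightarrow> nat set \<Rightarrow> nat set" where
  "IL X Y = (\<lambda>x. 2 * x) ` X \<union> (\<lambda>y. 2 * y + 1) ` Y"

definition Ev :: "nat set \<Rightarrow> nat set" where
  "Ev B = {x div 2 | x. x \<in> B \<and> even x}"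

definition Od :: "nat set \<Rightarrow> nat set" where
  "Od B = {(x - 1) div 2 | x. x \<in> B \<and> odd x}"

lemma IL_mem: "x \<in> IL X Y \<longleftrightarrow> (even x \<and> x div 2 \<in> X) \<or> (odd x \<and> x div 2 \<in> Y)"
proof
  assume "x \<in> IL X Y"
  thus "(even x \<and> x div 2 \<in> X) \<or> (odd x \<and> x div 2 \<in> Y)" unfolding IL_def by auto
next
  assume h: "(even x \<and> x div 2 \<in> X) \<or> (odd x \<and> x div 2 \<in> Y)"
  show "x \<in> IL X Y"
  proof (cases "even x")
    case True
    hence "x = 2 * (x div 2)" by simp
    thus ?thesis using h True unfolding IL_def by (metis UnI1 image_eqI)
  next
    case False
    hence "x = 2 * (x div 2) + 1" by simp
    thus ?thesis using h False unfolding IL_def by (metis UnI2 image_eqI)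
  qed
qed

lemma Ev_IL: "Ev (IL X Y) = X"
proof (rule set_eqI)
  fix k
  have "k \<in> Ev (IL X Y) \<longleftrightarrow> (\<exists>x. k = x div 2 \<and> x \<in> IL X Y \<and> even x)" unfolding Ev_def by auto
  also have "\<dots> \<longleftrightarrow> k \<in> X"
  proof
    assume "\<exists>x. k = x div 2 \<and> x \<in> IL X Y \<and> even x"
    thus "k \<in> X" using IL_mem by auto
  next
    assume "k \<in> X"
    hence "k = (2 * k) div 2 \<and> 2 * k \<in> IL X Y \<and> even (2 * k)" using IL_mem[of "2 * k"] by simp
    thus "\<exists>x. k = x div 2 \<and> x \<in> IL X Y \<and> even x" by blast
  qed
  finally show "k \<in> Ev (IL X Y) \<longleftrightarrow> k \<in> X" .
qed

lemma Od_IL: "Od (IL X Y) = Y"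
proof (rule set_eqI)
  fix k
  have "k \<in> Od (IL X Y) \<longleftrightarrow> (\<exists>x. k = (x - 1) div 2 \<and> x \<in> IL X Y \<and> odd x)" unfolding Od_def by auto
  also have "\<dots> \<longleftrightarrow> k \<in> Y"
  proof
    assume "\<exists>x. k = (x - 1) div 2 \<and> x \<in> IL X Y \<and> odd x"
    then obtain x where x: "k = (x - 1) div 2" "x \<in> IL X Y" "odd x" by blast
    hence "(x - 1) div 2 = x div 2" by (metis odd_two_times_div_two_nat oddE diff_Suc_1 div_mult_self1_is_m
          zero_less_numeral add.commute plus_1_eq_Suc)
    thus "k \<in> Y" using x IL_mem by auto
  next
    assume "k \<in> Y"
    hence "k = (2 * k + 1 - 1) div 2 \<and> 2 * k + 1 \<in> IL X Y \<and> odd (2 * k + 1)" using IL_mem[of "2 * k + 1"] by simp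
    thus "\<exists>x. k = (x - 1) div 2 \<and> x \<in> IL X Y \<and> odd x" by blast
  qed
  finally show "k \<in> Od (IL X Y) \<longleftrightarrow> k \<in> Y" .
qed

lemma IL_Ev_Od: "IL (Ev B) (Od B) = B"
proof (rule set_eqI)
  fix x
  show "x \<in> IL (Ev B) (Od B) \<longleftrightarrow> x \<in> B"
  proof (cases "even x")
    case True
    have "x div 2 \<in> Ev B \<longleftrightarrow> x \<in> B"
    proof
      assume "x div 2 \<in> Ev B"
      then obtain y where "x div 2 = y div 2" "y \<in> B" "even y" unfolding Ev_def by auto
      moreover hence "y = x" using True by (metis dvd_mult_div_cancel)
      ultimately show "x \<in> B" by simp
    next
      assume "x \<in> B" thus "x div 2 \<in> Ev B" using True unfolding Ev_def by auto
    qed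
    thus ?thesis using True IL_mem by auto
  next
    case False
    have "x div 2 \<in> Od B \<longleftrightarrow> x \<in> B"
    proof
      assume "x div 2 \<in> Od B"
      then obtain y where y: "x div 2 = (y - 1) div 2" "y \<in> B" "odd y" unfolding Od_def by auto
      have "y = 2 * ((y - 1) div 2) + 1" using y(3) by presburger
      moreover have "x = 2 * (x div 2) + 1" using False by presburger
      ultimately have "y = x" using y(1) by simp
      thus "x \<in> B" using y by simp
    next
      assume "x \<in> B"
      moreover have "x div 2 = (x - 1) div 2" using False by presburger
      ultimately show "x div 2 \<in> Od B" using False unfolding Od_def by auto
    qed
    thus ?thesis using False IL_mem by auto
  qed
qed

lemma finite_IL: "finite X \<Longrightarrow> finite Y \<Longrightarrow> finite (IL X Y)"
  unfolding IL_def by simp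

lemma card_IL:
  assumes "finite X" "finite Y"
  shows "card (IL X Y) = card X + card Y"
proof -
  have "card ((\<lambda>x. 2 * x) ` X) = card X" by (rule card_image) (auto simp: inj_on_def)
  moreover have "card ((\<lambda>y. 2 * y + 1) ` Y) = card Y" by (rule card_image) (auto simp: inj_on_def)
  moreover have "(\<lambda>x. 2 * x) ` X \<inter> (\<lambda>y. 2 * y + 1) ` Y = {}" by (auto; presburger)
  ultimately show ?thesis unfolding IL_def using assms by (simp add: card_Un_disjoint)
qed

lemma rc_IL:
  assumes "finite X" "finite Y"
  shows "rc 2 (IL X Y) = (\<lambda>r. if r = 0 then card X else if r = 1 then card Y else 0)"
proof
  fix r :: nat
  show "rc 2 (IL X Y) r = (if r = 0 then card X else if r = 1 then card Y else 0)"
  proof -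
    have 0: "{x \<in> IL X Y. x mod 2 = 0} = (\<lambda>x. 2 * x) ` X" unfolding IL_def by (auto; presburger)
    have 1: "{x \<in> IL X Y. x mod 2 = 1} = (\<lambda>y. 2 * y + 1) ` Y" unfolding IL_def by (auto; presburger)
    have "card ((\<lambda>x. 2 * x) ` X) = card X" by (rule card_image) (auto simp: inj_on_def)
    moreover have "card ((\<lambda>y. 2 * y + 1) ` Y) = card Y" by (rule card_image) (auto simp: inj_on_def)
    moreover have e: "r \<noteq> 0 \<Longrightarrow> r \<noteq> 1 \<Longrightarrow> {x \<in> IL X Y. x mod 2 = r} = {}" by (auto; presburger)
    ultimately show ?thesis unfolding rc_def
    proof -
      assume c: "card ((\<lambda>x. 2 * x) ` X) = card X" "card ((\<lambda>y. 2 * y + 1) ` Y) = card Y"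
      consider "r = 0" | "r = 1" | "r \<noteq> 0" "r \<noteq> 1" by blast
      thus "card {x \<in> IL X Y. x mod 2 = r} = (if r = 0 then card X else if r = 1 then card Y else 0)"
      proof cases
        case 1 thus ?thesis using 0 c by simp
      next
        case 2 thus ?thesis using 1 c by simp
      next
        case 3
        have ee: "{x \<in> IL X Y. x mod 2 = r} = {}" using e[OF 3] .
        have "card {x \<in> IL X Y. x mod 2 = r} = 0" by (subst ee) simp
        thus ?thesis using 3 by simp
      qed
    qed
  qed
qed

lemma card_Ev: "finite B \<Longrightarrow> card (Ev B) = rc 2 B 0"
proof -
  assume fB: "finite B"
  have "Ev B = (\<lambda>x. x div 2) ` {x \<in> B. x mod 2 = 0}" unfolding Ev_def by auto
  moreover have "inj_on (\<lambda>x. x div 2) {x \<in> B. x mod 2 = 0}"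
    by (auto simp: inj_on_def; presburger)
  ultimately show ?thesis unfolding rc_def by (simp add: card_image)
qed

lemma card_Od: "finite B \<Longrightarrow> card (Od B) = rc 2 B 1"
proof -
  assume fB: "finite B"
  have "Od B = (\<lambda>x. (x - 1) div 2) ` {x \<in> B. x mod 2 = 1}" unfolding Od_def by (auto simp: odd_iff_mod_2_eq_one)
  moreover have "inj_on (\<lambda>x. (x - 1) div 2) {x \<in> B. x mod 2 = 1}"
    by (auto simp: inj_on_def; presburger)
  ultimately show ?thesis unfolding rc_def by (simp add: card_image)
qed

lemma flush_IL: "flush 2 (IL {..<k0} {..<k1})"
  unfolding flush_def
proof (intro ballI impI)
  fix x assume "x \<in> IL {..<k0} {..<k1}" "2 \<le> x"
  thus "x - 2 \<in> IL {..<k0} {..<k1}" unfolding IL_mem by (auto; presburger)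
qed

lemma Ev_shift2: "Ev (insert 0 (Suc ` insert 0 (Suc ` B))) = insert 0 (Suc ` Ev B)"
proof (rule set_eqI)
  fix k
  show "k \<in> Ev (insert 0 (Suc ` insert 0 (Suc ` B))) \<longleftrightarrow> k \<in> insert 0 (Suc ` Ev B)"
    unfolding Ev_def
  proof
    assume "k \<in> {x div 2 |x. x \<in> insert 0 (Suc ` insert 0 (Suc ` B)) \<and> even x}"
    then obtain x where x: "k = x div 2" "x \<in> insert 0 (Suc ` insert 0 (Suc ` B))" "even x" by blast
    show "k \<in> insert 0 (Suc ` {x div 2 |x. x \<in> B \<and> even x})"
    proof (cases "x = 0")
      case False
      then obtain y where "y \<in> B" "x = Suc (Suc y)" using x(2,3) by auto
      thus ?thesis using x by auto
    qed (use x in simp)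
  next
    assume "k \<in> insert 0 (Suc ` {x div 2 |x. x \<in> B \<and> even x})"
    thus "k \<in> {x div 2 |x. x \<in> insert 0 (Suc ` insert 0 (Suc ` B)) \<and> even x}"
    proof
      assume "k = 0"
      hence "k = 0 div 2 \<and> (0::nat) \<in> insert 0 (Suc ` insert 0 (Suc ` B)) \<and> even (0::nat)" by simp
      thus ?thesis by blast
    next
      assume "k \<in> Suc ` {x div 2 |x. x \<in> B \<and> even x}"
      then obtain y where y: "y \<in> B" "even y" "k = Suc (y div 2)" by auto
      hence "k = Suc (Suc y) div 2 \<and> Suc (Suc y) \<in> insert 0 (Suc ` insert 0 (Suc ` B)) \<and> even (Suc (Suc y))" by simp
      thus ?thesis by blast
    qed
  qed
qed

lemma Od_shift2: "Od (insert 0 (Suc ` insert 0 (Suc ` B))) = insert 0 (Suc ` Od B)"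
proof (rule set_eqI)
  fix k
  show "k \<in> Od (insert 0 (Suc ` insert 0 (Suc ` B))) \<longleftrightarrow> k \<in> insert 0 (Suc ` Od B)"
    unfolding Od_def
  proof
    assume "k \<in> {(x - 1) div 2 |x. x \<in> insert 0 (Suc ` insert 0 (Suc ` B)) \<and> odd x}"
    then obtain x where x: "k = (x - 1) div 2" "x \<in> insert 0 (Suc ` insert 0 (Suc ` B))" "odd x" by blast
    show "k \<in> insert 0 (Suc ` {(x - 1) div 2 |x. x \<in> B \<and> odd x})"
    proof (cases "x = 1")
      case False
      then obtain y where y: "y \<in> B" "x = Suc (Suc y)" using x(2,3) by auto
      hence "odd y" "k = Suc ((y - 1) div 2)" using x by (auto, presburger)
      thus ?thesis using y by auto
    qed (use x in simp)
  next
    assume "k \<in> insert 0 (Suc ` {(x - 1) div 2 |x. x \<in> B \<and> odd x})"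
    thus "k \<in> {(x - 1) div 2 |x. x \<in> insert 0 (Suc ` insert 0 (Suc ` B)) \<and> odd x}"
    proof
      assume "k = 0"
      hence "k = (1 - 1) div 2 \<and> (1::nat) \<in> insert 0 (Suc ` insert 0 (Suc ` B)) \<and> odd (1::nat)" by simp
      thus ?thesis by blast
    next
      assume "k \<in> Suc ` {(x - 1) div 2 |x. x \<in> B \<and> odd x}"
      then obtain y where y: "y \<in> B" "odd y" "k = Suc ((y - 1) div 2)" by auto
      hence "k = (Suc (Suc y) - 1) div 2" "odd (Suc (Suc y))" by (auto, presburger)
      hence "k = (Suc (Suc y) - 1) div 2 \<and> Suc (Suc y) \<in> insert 0 (Suc ` insert 0 (Suc ` B)) \<and> odd (Suc (Suc y))"
        using y by simp
      thus ?thesis by blast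
    qed
  qed
qed

lemma quot2_shift:
  assumes "is_partition L" "length L \<le> M" "odd M"
  shows "quot2 L = (pi_beta (Ev (beta M L)), pi_beta (Od (beta M L)))"
proof -
  define M0 where "M0 = odd_size L"
  have M0c: "odd M0 \<and> length L \<le> M0 \<and> M0 \<le> M"
  proof (cases "odd (length L)")
    case True thus ?thesis using assms by (simp add: M0_def odd_size_def)
  next
    case False
    hence "M0 = Suc (length L)" by (simp add: M0_def odd_size_def)
    moreover have "Suc (length L) \<le> M" using False assms(2,3) by (cases "length L = M") auto
    ultimately show ?thesis using False by simp
  qed
  hence M0: "odd M0" "length L \<le> M0" "M0 \<le> M" by auto
  have "even (M - M0)" using M0 assms(3) by presburger
  then obtain j where "M - M0 = 2 * j" by (rule evenE)
  hence j: "M = M0 + 2 * j" using M0 by simp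
  have "\<forall>j. (pi_beta (Ev (beta (M0 + 2 * j) L)), pi_beta (Od (beta (M0 + 2 * j) L))) =
            (pi_beta (Ev (beta M0 L)), pi_beta (Od (beta M0 L)))"
  proof
    fix j show "(pi_beta (Ev (beta (M0 + 2 * j) L)), pi_beta (Od (beta (M0 + 2 * j) L))) =
            (pi_beta (Ev (beta M0 L)), pi_beta (Od (beta M0 L)))"
    proof (induction j)
      case (Suc j)
      let ?n = "M0 + 2 * j"
      have ln: "length L \<le> ?n" using M0 by simp
      have "beta (M0 + 2 * Suc j) L = beta (Suc (Suc ?n)) L" by simp
      also have "\<dots> = insert 0 (Suc ` insert 0 (Suc ` beta ?n L))"
        using beta_Suc[of L "Suc ?n"] beta_Suc[OF ln] ln by simp
      finally have b: "beta (M0 + 2 * Suc j) L = insert 0 (Suc ` insert 0 (Suc ` beta ?n L))" .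
      have fE: "finite (Ev (beta ?n L))" unfolding Ev_def using finite_beta by simp
      have fO: "finite (Od (beta ?n L))" unfolding Od_def using finite_beta by simp
      show ?case using Suc b Ev_shift2 Od_shift2 pi_beta_shift[OF fE] pi_beta_shift[OF fO] by simp
    qed simp
  qed
  hence "(pi_beta (Ev (beta M L)), pi_beta (Od (beta M L))) = (pi_beta (Ev (beta M0 L)), pi_beta (Od (beta M0 L)))"
    using j by blast
  moreover have "quot2 L = (pi_beta (Ev (beta M0 L)), pi_beta (Od (beta M0 L)))"
    unfolding quot2_def M0_def Ev_def Od_def Let_def by simp
  ultimately show ?thesis by simp
qed


lemma stair_len: "length (staircase t) = t"
  by (simp add: staircase_def)

lemma stair_part: "part (staircase t) a = (if 1 \<le> a \<and> a \<le> t then t + 1 - a else 0)"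
proof (cases "1 \<le> a \<and> a \<le> t")
  case True
  hence l: "a - 1 < length [1..<Suc t]" by auto
  have "rev [1..<Suc t] ! (a - 1) = [1..<Suc t] ! (length [1..<Suc t] - Suc (a - 1))"
    by (rule rev_nth[OF l])
  also have "\<dots> = t + 1 - a" using True by (auto simp del: upt_Suc)
  finally have "rev [1..<Suc t] ! (a - 1) = t + 1 - a" .
  thus ?thesis using True by (simp add: part_def staircase_def)
qed (auto simp: part_def staircase_def)

lemma stair_partition: "is_partition (staircase t)"
proof -
  have "sorted_wrt (\<le>) [1..<Suc t]" by (rule sorted_upt)
  hence "sorted_wrt (\<ge>) (rev [1..<Suc t])" by (simp add: sorted_wrt_rev del: upt_Suc)
  moreover have "0 \<notin> set (rev [1..<Suc t])" by simp
  ultimately show ?thesis unfolding is_partition_def staircase_def by simp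
qed

definition M_of :: "nat \<Rightarrow> nat \<Rightarrow> nat" where
  "M_of t N = (if even t then t + 2 * N + 1 else t + 2 * N)"
definition k0 :: "nat \<Rightarrow> nat \<Rightarrow> nat" where
  "k0 t N = (if even t then N + 1 + t else N)"
definition k1 :: "nat \<Rightarrow> nat \<Rightarrow> nat" where
  "k1 t N = (if even t then N else N + t)"

lemma M_odd: "odd (M_of t N)" by (simp add: M_of_def)
lemma k01: "k0 t N + k1 t N = M_of t N" by (simp add: M_of_def k0_def k1_def)
lemma kN: "N \<le> k0 t N" "N \<le> k1 t N" "N \<le> M_of t N" "t \<le> M_of t N" by (auto simp: M_of_def k0_def k1_def)

lemma stair_beta: "beta (M_of t N) (staircase t) = IL {..<k0 t N} {..<k1 t N}"
proof -
  let ?M = "M_of t N"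
  have sub: "beta ?M (staircase t) \<subseteq> IL {..<k0 t N} {..<k1 t N}"
  proof
    fix v assume "v \<in> beta ?M (staircase t)"
    then obtain a where a: "1 \<le> a" "a \<le> ?M" "v = (if 1 \<le> a \<and> a \<le> t then t + 1 - a else 0) + ?M - a"
      unfolding beta_bp bp_def stair_part by auto
    have "(even v \<and> v div 2 < k0 t N) \<or> (odd v \<and> v div 2 < k1 t N)"
    proof (cases "even t")
      case et: True
      hence M: "?M = t + 2 * N + 1" "k0 t N = N + 1 + t" "k1 t N = N" by (auto simp: M_of_def k0_def k1_def)
      show ?thesis
      proof (cases "a \<le> t")
        case True
        hence "v = 2 * (t + N + 1 - a)" using a M by simp
        thus ?thesis using M a by simp
      next
        case False
        hence v: "v = t + 2 * N + 1 - a" using a M by simp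
        have "v \<le> 2 * N" using v False by simp
        thus ?thesis using M by presburger
      qed
    next
      case ot: False
      hence M: "?M = t + 2 * N" "k0 t N = N" "k1 t N = N + t" by (auto simp: M_of_def k0_def k1_def)
      show ?thesis
      proof (cases "a \<le> t")
        case True
        hence "v = 2 * (t + N - a) + 1" using a M by simp
        thus ?thesis using M a by simp
      next
        case False
        hence v: "v = t + 2 * N - a" using a M by simp
        have "v < 2 * N" using v False a(2) M(1) by simp
        thus ?thesis using M by presburger
      qed
    qed
    thus "v \<in> IL {..<k0 t N} {..<k1 t N}" unfolding IL_mem by auto
  qed
  have "card (beta ?M (staircase t)) = ?M"
    using card_beta[OF stair_partition] stair_len kN by simp
  moreover have "card (IL {..<k0 t N} {..<k1 t N}) = ?M" using card_IL k01 by simp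
  ultimately show ?thesis using sub by (intro card_subset_eq) (auto simp: IL_def)
qed

definition nu0 :: "nat \<Rightarrow> bipartition \<Rightarrow> bipartition" where
  "nu0 t nu = (if even t then nu else prod.swap nu)"

definition SN :: "nat \<Rightarrow> nat \<Rightarrow> bipartition \<Rightarrow> nat set" where
  "SN t N nu = IL (beta (k0 t N) (fst (nu0 t nu))) (beta (k1 t N) (snd (nu0 t nu)))"

lemma barquot2_eq: "barquot2 t L = nu \<longleftrightarrow> quot2 L = nu0 t nu"
  unfolding barquot2_def nu0_def by (cases "quot2 L", cases nu) auto

definition PhiP :: "nat \<Rightarrow> bipartition \<Rightarrow> nat list \<Rightarrow> bool" where
  "PhiP t nu L \<longleftrightarrow> is_partition L \<and> ecore 2 L = staircase t \<and> barquot2 t L = nu"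

lemma nu0_parts:
  assumes "is_partition (fst nu)" "is_partition (snd nu)" "length (fst nu) \<le> N" "length (snd nu) \<le> N"
  shows "is_partition (fst (nu0 t nu)) \<and> is_partition (snd (nu0 t nu)) \<and>
         length (fst (nu0 t nu)) \<le> k0 t N \<and> length (snd (nu0 t nu)) \<le> k1 t N"
  using assms kN[of N t] by (auto simp: nu0_def)

lemma rc_SN:
  assumes "is_partition (fst nu)" "is_partition (snd nu)" "length (fst nu) \<le> N" "length (snd nu) \<le> N"
  shows "rc 2 (SN t N nu) = rc 2 (beta (M_of t N) (staircase t))"
proof -
  have p: "is_partition (fst (nu0 t nu)) \<and> is_partition (snd (nu0 t nu)) \<and>
         length (fst (nu0 t nu)) \<le> k0 t N \<and> length (snd (nu0 t nu)) \<le> k1 t N"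
    using nu0_parts[OF assms] .
  have c1: "card (beta (k0 t N) (fst (nu0 t nu))) = k0 t N" using card_beta p by blast
  have c2: "card (beta (k1 t N) (snd (nu0 t nu))) = k1 t N" using card_beta p by blast
  show ?thesis unfolding SN_def stair_beta rc_IL[OF finite_beta finite_beta]
      rc_IL[OF finite_lessThan finite_lessThan] c1 c2 card_lessThan by (rule refl)
qed

lemma Phi_exists:
  assumes "is_partition (fst nu)" "is_partition (snd nu)" "length (fst nu) \<le> N" "length (snd nu) \<le> N"
  shows "PhiP t nu (pi_beta (SN t N nu)) \<and> length (pi_beta (SN t N nu)) \<le> M_of t N"
proof -
  let ?M = "M_of t N" and ?S = "SN t N nu"
  have p: "is_partition (fst (nu0 t nu)) \<and> is_partition (snd (nu0 t nu)) \<and>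
         length (fst (nu0 t nu)) \<le> k0 t N \<and> length (snd (nu0 t nu)) \<le> k1 t N"
    using nu0_parts[OF assms] .
  have fS: "finite ?S" unfolding SN_def by (intro finite_IL finite_beta)
  have cS: "card ?S = ?M" unfolding SN_def using card_IL[OF finite_beta finite_beta] card_beta p k01 by simp
  define L where "L = pi_beta ?S"
  have L: "is_partition L" "length L \<le> ?M" "beta ?M L = ?S" using pi_beta_props[OF fS] cS L_def by auto
  have "ecore 2 L = staircase t"
  proof (rule ecore_char[OF L(1) _ L(2) stair_partition])
    show "length (staircase t) \<le> ?M" using stair_len kN by simp
    show "flush 2 (beta ?M (staircase t))" unfolding stair_beta by (rule flush_IL)
    show "rc 2 (beta ?M (staircase t)) = rc 2 (beta ?M L)" using rc_SN[OF assms] L(3) by simp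
  qed simp
  moreover have "quot2 L = nu0 t nu"
  proof -
    have "quot2 L = (pi_beta (Ev ?S), pi_beta (Od ?S))" using quot2_shift[OF L(1,2) M_odd] L(3) by simp
    also have "\<dots> = (fst (nu0 t nu), snd (nu0 t nu))"
      unfolding SN_def Ev_IL Od_IL using pi_beta_beta p by simp
    finally show ?thesis by simp
  qed
  ultimately show ?thesis using L unfolding PhiP_def barquot2_eq L_def by simp
qed

lemma Phi_char:
  assumes "is_partition (fst nu)" "is_partition (snd nu)" "length (fst nu) \<le> N" "length (snd nu) \<le> N"
    and P: "PhiP t nu L" and lL: "length L \<le> M_of t N"
  shows "beta (M_of t N) L = SN t N nu"
proof -
  let ?M = "M_of t N" and ?B = "beta (M_of t N) L"
  have p: "is_partition (fst (nu0 t nu)) \<and> is_partition (snd (nu0 t nu)) \<and>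
         length (fst (nu0 t nu)) \<le> k0 t N \<and> length (snd (nu0 t nu)) \<le> k1 t N"
    using nu0_parts[OF assms(1-4)] .
  have L: "is_partition L" "ecore 2 L = staircase t" "quot2 L = nu0 t nu"
    using P unfolding PhiP_def barquot2_eq by auto
  have "rc 2 (beta ?M (ecore 2 L)) = rc 2 ?B" using ecore_rc[OF L(1) _ lL] by simp
  hence rcB: "rc 2 ?B = rc 2 (IL {..<k0 t N} {..<k1 t N})" using L(2) stair_beta by simp
  have cE: "card (Ev ?B) = k0 t N" using card_Ev[OF finite_beta] rcB rc_IL[of "{..<k0 t N}" "{..<k1 t N}"] by simp
  have cO: "card (Od ?B) = k1 t N" using card_Od[OF finite_beta] rcB rc_IL[of "{..<k0 t N}" "{..<k1 t N}"] by simp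
  have q: "(pi_beta (Ev ?B), pi_beta (Od ?B)) = nu0 t nu" using quot2_shift[OF L(1) lL M_odd] L(3) by simp
  have fE: "finite (Ev ?B)" unfolding Ev_def using finite_beta by simp
  have fO: "finite (Od ?B)" unfolding Od_def using finite_beta by simp
  have "Ev ?B = beta (k0 t N) (fst (nu0 t nu))" using pi_beta_props[OF fE] cE q by (metis fst_conv)
  moreover have "Od ?B = beta (k1 t N) (snd (nu0 t nu))" using pi_beta_props[OF fO] cO q by (metis snd_conv)
  ultimately show ?thesis unfolding SN_def using IL_Ev_Od[of ?B] by simp
qed

lemma Phi_props:
  assumes "is_partition (fst nu)" "is_partition (snd nu)"
  shows "PhiP t nu (Phi t nu)"
proof -
  define N0 where "N0 = max (length (fst nu)) (length (snd nu))"
  have ex: "PhiP t nu (pi_beta (SN t N0 nu))" using Phi_exists[OF assms, of N0] by (simp add: N0_def)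
  have uq: "L1 = L2" if "PhiP t nu L1" "PhiP t nu L2" for L1 L2
  proof -
    define N where "N = max N0 (max (length L1) (length L2))"
    have l: "length (fst nu) \<le> N" "length (snd nu) \<le> N" "length L1 \<le> M_of t N" "length L2 \<le> M_of t N"
      using kN[of N t] by (auto simp: N_def N0_def)
    have "beta (M_of t N) L1 = beta (M_of t N) L2"
      using Phi_char[OF assms l(1,2) that(1) l(3)] Phi_char[OF assms l(1,2) that(2) l(4)] by simp
    thus ?thesis using beta_inj that l unfolding PhiP_def by blast
  qed
  have "\<exists>!L. PhiP t nu L" using ex uq by blast
  thus ?thesis unfolding Phi_def PhiP_def[symmetric] by (rule theI')
qed


lemma nt:
  fixes e j1 j2 :: nat and D :: int
  assumes "odd e" "j1 < e" "j2 < e" "(2 * int j1 + D) mod int e = (2 * int j2 + D) mod int e"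
  shows "j1 = j2"
proof -
  have "int e dvd (2 * int j1 + D) - (2 * int j2 + D)" using assms(4) by (simp add: mod_eq_dvd_iff)
  hence "int e dvd 2 * (int j1 - int j2)" by (simp add: algebra_simps)
  moreover have "coprime (int e) 2" using assms(1) by (simp add: coprime_commute)
  ultimately have d: "int e dvd (int j1 - int j2)" using coprime_dvd_mult_right_iff by blast
  show ?thesis
  proof (rule ccontr)
    assume "j1 \<noteq> j2"
    hence "int j1 - int j2 \<noteq> 0" by simp
    hence "\<bar>int e\<bar> \<le> \<bar>int j1 - int j2\<bar>" using dvd_imp_le_int d by blast
    thus False using assms(2,3) by linarith
  qed
qed

lemma IL_moveX:
  assumes "y \<in> X" "Suc y \<notin> X"
  shows "2 * y \<in> IL X Y \<and> 2 * y + 2 \<notin> IL X Y \<and>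
         IL (insert (Suc y) (X - {y})) Y = insert (2 * y + 2) (IL X Y - {2 * y})"
proof (intro conjI)
  show "2 * y \<in> IL X Y" using assms IL_mem[of "2 * y"] by simp
  show "2 * y + 2 \<notin> IL X Y" using assms IL_mem[of "2 * y + 2"] by simp
  show "IL (insert (Suc y) (X - {y})) Y = insert (2 * y + 2) (IL X Y - {2 * y})"
  proof (rule set_eqI)
    fix x
    show "x \<in> IL (insert (Suc y) (X - {y})) Y \<longleftrightarrow> x \<in> insert (2 * y + 2) (IL X Y - {2 * y})"
    proof (cases "even x")
      case True
      have 1: "x div 2 = Suc y \<longleftrightarrow> x = 2 * y + 2" using True by presburger
      have 2: "x div 2 = y \<longleftrightarrow> x = 2 * y" using True by presburger
      show ?thesis using True 1 2 by (auto simp: IL_mem)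
    next
      case False
      hence "x \<noteq> 2 * y + 2" "x \<noteq> 2 * y" by presburger+
      thus ?thesis using False by (auto simp: IL_mem)
    qed
  qed
qed

lemma IL_moveY:
  assumes "y \<in> Y" "Suc y \<notin> Y"
  shows "2 * y + 1 \<in> IL X Y \<and> 2 * y + 1 + 2 \<notin> IL X Y \<and>
         IL X (insert (Suc y) (Y - {y})) = insert (2 * y + 1 + 2) (IL X Y - {2 * y + 1})"
proof (intro conjI)
  show "2 * y + 1 \<in> IL X Y" using assms IL_mem[of "2 * y + 1"] by simp
  have "(2 * y + 1 + 2) div 2 = Suc y" by presburger
  thus "2 * y + 1 + 2 \<notin> IL X Y" using assms IL_mem[of "2 * y + 1 + 2"] by simp
  show "IL X (insert (Suc y) (Y - {y})) = insert (2 * y + 1 + 2) (IL X Y - {2 * y + 1})"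
  proof (rule set_eqI)
    fix x
    show "x \<in> IL X (insert (Suc y) (Y - {y})) \<longleftrightarrow> x \<in> insert (2 * y + 1 + 2) (IL X Y - {2 * y + 1})"
    proof (cases "even x")
      case True
      hence "x \<noteq> 2 * y + 1 + 2" "x \<noteq> 2 * y + 1" by presburger+
      thus ?thesis using True by (auto simp: IL_mem)
    next
      case False
      have 1: "x div 2 = Suc y \<longleftrightarrow> x = 2 * y + 1 + 2" using False by presburger
      have 2: "x div 2 = y \<longleftrightarrow> x = 2 * y + 1" using False by presburger
      show ?thesis using False 1 2 by (auto simp: IL_mem)
    qed
  qed
qed

lemma rc_contra:
  assumes "finite S" "z1 \<in> S" "z1 + 2 \<notin> S" "z2 \<in> S" "z2 + 2 \<notin> S" "3 \<le> e"
    "rc e (insert (z1 + 2) (S - {z1})) = rc e (insert (z2 + 2) (S - {z2}))"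
  shows "z1 mod e = z2 mod e"
proof (rule ccontr)
  assume ne: "z1 mod e \<noteq> z2 mod e"
  let ?r = "z1 mod e"
  have m2: "(z + 2) mod e \<noteq> z mod e" for z
  proof
    assume "(z + 2) mod e = z mod e"
    hence "e dvd 2" by (metis add.commute mod_add_self2 mod_eq_dvd_iff_nat le_add2 add_diff_cancel_right')
    thus False using assms(6) by (auto dest: dvd_imp_le)
  qed
  have "int (rc e (insert (z1 + 2) (S - {z1})) ?r) = int (rc e S ?r) - 1"
    using move_card[OF assms(1,2,3), of "\<lambda>x. x mod e = ?r"] m2[of z1] unfolding rc_def by simp
  moreover have "int (rc e (insert (z2 + 2) (S - {z2})) ?r) =
      int (rc e S ?r) - 0 + (if (z2 + 2) mod e = ?r then 1 else 0)"
    using move_card[OF assms(1,4,5), of "\<lambda>x. x mod e = ?r"] ne unfolding rc_def by simp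
  ultimately show False using assms(7) by (auto split: if_splits)
qed

definition Dt :: "nat \<Rightarrow> nat \<Rightarrow> int" where
  "Dt t N = (if even t then 2 * int N - 1 else 2 * int N - 2)"

lemma mod_step:
  fixes z cont :: int and e :: nat
  assumes "z = 2 * cont + D + E" "E = 0 \<or> E = int e" "cont mod int e = int j"
  shows "z mod int e = (2 * int j + D) mod int e"
proof -
  have "z mod int e = (2 * cont + D) mod int e" using assms(1,2) by auto
  also have "\<dots> = (2 * (cont mod int e) + D) mod int e" by (metis mod_add_left_eq mod_mult_right_eq)
  finally show ?thesis using assms(3) by simp
qed

lemma half_charge: "odd e \<Longrightarrow> 2 * ((1 - int e) div 2) = 1 - int e"
proof -
  assume "odd e"
  hence "even (1 - int e)" by simp
  thus ?thesis by (rule dvd_mult_div_cancel)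
qed

lemma move_lemma:
  assumes mu: "is_partition (fst mu)" "is_partition (snd mu)"
    and ad: "addable_node mu (a, b, jj)" and res: "residue e (charge e t) (a, b, jj) = int j"
    and nu: "nu = add_node mu (a, b, jj)" and oe: "odd e"
    and N: "length (fst mu) \<le> N" "length (snd mu) \<le> N" "length (fst nu) \<le> N" "length (snd nu) \<le> N"
  shows "is_partition (fst nu) \<and> is_partition (snd nu) \<and>
    (\<exists>z. z \<in> SN t N mu \<and> z + 2 \<notin> SN t N mu \<and> SN t N nu = insert (z + 2) (SN t N mu - {z}) \<and>
         int z mod int e = (2 * int j + Dt t N) mod int e)"
proof -
  have jj: "jj = 1 \<or> jj = 2" and adb: "addable (comp mu jj) (a, b)" using ad unfolding addable_node_def by auto
  have cmod: "content (charge e t) (a, b, jj) mod int e = int j" using res unfolding residue_def .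
  have hc: "2 * ((1 - int e) div 2) = 1 - int e" using half_charge[OF oe] .
  from jj show ?thesis
  proof
    assume j1: "jj = 1"
    let ?l = "part_of_dg (dg (fst mu) \<union> {(a, b)})"
    have nuE: "nu = (?l, snd mu)" using nu j1 by (simp add: add_node_def)
    have adf: "addable (fst mu) (a, b)" using adb j1 by (simp add: comp_def)
    have cont: "content (charge e t) (a, b, jj) = int b - int a + int t + (1 - int e) div 2"
      using j1 by (simp add: content_def charge_def)
    show ?thesis
    proof (cases "even t")
      case True
      let ?k = "k0 t N"
      have B: "is_partition ?l \<and> length (fst mu) \<le> ?k \<and> a \<le> ?k \<and> 1 \<le> a \<and> b = part (fst mu) a + 1 \<and>
         bp ?k (fst mu) a \<in> beta ?k (fst mu) \<and> Suc (bp ?k (fst mu) a) \<notin> beta ?k (fst mu) \<and>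
         beta ?k ?l = insert (Suc (bp ?k (fst mu) a)) (beta ?k (fst mu) - {bp ?k (fst mu) a})"
        using add_node_beta[OF mu(1) adf refl] N(3) nuE kN[of N t] by simp
      let ?y = "bp ?k (fst mu) a"
      have Bx: "?y \<in> beta ?k (fst mu)" "Suc ?y \<notin> beta ?k (fst mu)"
        "beta ?k ?l = insert (Suc ?y) (beta ?k (fst mu) - {?y})" using B by blast+
      have I: "2 * ?y \<in> SN t N mu \<and> 2 * ?y + 2 \<notin> SN t N mu \<and> SN t N nu = insert (2 * ?y + 2) (SN t N mu - {2 * ?y})"
        using IL_moveX[of ?y "beta ?k (fst mu)" "beta (k1 t N) (snd mu)"] Bx True nuE
        unfolding SN_def nu0_def by simp
      have "int (2 * ?y) = 2 * (int b - int a + int t + (1 - int e) div 2) + Dt t N + int e"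
        using B True hc unfolding bp_def Dt_def k0_def by simp
      hence "int (2 * ?y) mod int e = (2 * int j + Dt t N) mod int e"
        using mod_step[of _ "int b - int a + int t + (1 - int e) div 2" "Dt t N" "int e" e j] cmod cont by simp
      thus ?thesis using I B nuE mu by (intro conjI exI[of _ "2 * ?y"]) auto
    next
      case False
      let ?k = "k1 t N"
      have B: "is_partition ?l \<and> length (fst mu) \<le> ?k \<and> a \<le> ?k \<and> 1 \<le> a \<and> b = part (fst mu) a + 1 \<and>
         bp ?k (fst mu) a \<in> beta ?k (fst mu) \<and> Suc (bp ?k (fst mu) a) \<notin> beta ?k (fst mu) \<and>
         beta ?k ?l = insert (Suc (bp ?k (fst mu) a)) (beta ?k (fst mu) - {bp ?k (fst mu) a})"
        using add_node_beta[OF mu(1) adf refl] N(3) nuE kN[of N t] by simp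
      let ?y = "bp ?k (fst mu) a"
      have Bx: "?y \<in> beta ?k (fst mu)" "Suc ?y \<notin> beta ?k (fst mu)"
        "beta ?k ?l = insert (Suc ?y) (beta ?k (fst mu) - {?y})" using B by blast+
      have I: "2 * ?y + 1 \<in> SN t N mu \<and> 2 * ?y + 1 + 2 \<notin> SN t N mu \<and>
          SN t N nu = insert (2 * ?y + 1 + 2) (SN t N mu - {2 * ?y + 1})"
        using IL_moveY[of ?y "beta ?k (fst mu)" "beta (k0 t N) (snd mu)"] Bx False nuE
        unfolding SN_def nu0_def by simp
      have "int (2 * ?y + 1) = 2 * (int b - int a + int t + (1 - int e) div 2) + Dt t N + int e"
        using B False hc unfolding bp_def Dt_def k1_def by simp
      hence "int (2 * ?y + 1) mod int e = (2 * int j + Dt t N) mod int e"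
        using mod_step[of _ "int b - int a + int t + (1 - int e) div 2" "Dt t N" "int e" e j] cmod cont by simp
      thus ?thesis using I B nuE mu by (intro conjI exI[of _ "2 * ?y + 1"]) auto
    qed
  next
    assume j2: "jj = 2"
    let ?l = "part_of_dg (dg (snd mu) \<union> {(a, b)})"
    have nuE: "nu = (fst mu, ?l)" using nu j2 by (simp add: add_node_def)
    have adf: "addable (snd mu) (a, b)" using adb j2 by (simp add: comp_def)
    have cont: "content (charge e t) (a, b, jj) = int b - int a"
      using j2 by (simp add: content_def charge_def)
    show ?thesis
    proof (cases "even t")
      case True
      let ?k = "k1 t N"
      have B: "is_partition ?l \<and> length (snd mu) \<le> ?k \<and> a \<le> ?k \<and> 1 \<le> a \<and> b = part (snd mu) a + 1 \<and>
         bp ?k (snd mu) a \<in> beta ?k (snd mu) \<and> Suc (bp ?k (snd mu) a) \<notin> beta ?k (snd mu) \<and>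
         beta ?k ?l = insert (Suc (bp ?k (snd mu) a)) (beta ?k (snd mu) - {bp ?k (snd mu) a})"
        using add_node_beta[OF mu(2) adf refl] N(4) nuE kN[of N t] by simp
      let ?y = "bp ?k (snd mu) a"
      have Bx: "?y \<in> beta ?k (snd mu)" "Suc ?y \<notin> beta ?k (snd mu)"
        "beta ?k ?l = insert (Suc ?y) (beta ?k (snd mu) - {?y})" using B by blast+
      have I: "2 * ?y + 1 \<in> SN t N mu \<and> 2 * ?y + 1 + 2 \<notin> SN t N mu \<and>
          SN t N nu = insert (2 * ?y + 1 + 2) (SN t N mu - {2 * ?y + 1})"
        using IL_moveY[of ?y "beta ?k (snd mu)" "beta (k0 t N) (fst mu)"] Bx True nuE
        unfolding SN_def nu0_def by simp
      have "int (2 * ?y + 1) = 2 * (int b - int a) + Dt t N + 0"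
        using B True unfolding bp_def Dt_def k1_def by simp
      hence "int (2 * ?y + 1) mod int e = (2 * int j + Dt t N) mod int e"
        using mod_step[of _ "int b - int a" "Dt t N" 0 e j] cmod cont by simp
      thus ?thesis using I B nuE mu by (intro conjI exI[of _ "2 * ?y + 1"]) auto
    next
      case False
      let ?k = "k0 t N"
      have B: "is_partition ?l \<and> length (snd mu) \<le> ?k \<and> a \<le> ?k \<and> 1 \<le> a \<and> b = part (snd mu) a + 1 \<and>
         bp ?k (snd mu) a \<in> beta ?k (snd mu) \<and> Suc (bp ?k (snd mu) a) \<notin> beta ?k (snd mu) \<and>
         beta ?k ?l = insert (Suc (bp ?k (snd mu) a)) (beta ?k (snd mu) - {bp ?k (snd mu) a})"
        using add_node_beta[OF mu(2) adf refl] N(4) nuE kN[of N t] by simp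
      let ?y = "bp ?k (snd mu) a"
      have Bx: "?y \<in> beta ?k (snd mu)" "Suc ?y \<notin> beta ?k (snd mu)"
        "beta ?k ?l = insert (Suc ?y) (beta ?k (snd mu) - {?y})" using B by blast+
      have I: "2 * ?y \<in> SN t N mu \<and> 2 * ?y + 2 \<notin> SN t N mu \<and> SN t N nu = insert (2 * ?y + 2) (SN t N mu - {2 * ?y})"
        using IL_moveX[of ?y "beta ?k (snd mu)" "beta (k1 t N) (fst mu)"] Bx False nuE
        unfolding SN_def nu0_def by simp
      have "int (2 * ?y) = 2 * (int b - int a) + Dt t N + 0"
        using B False unfolding bp_def Dt_def k0_def by simp
      hence "int (2 * ?y) mod int e = (2 * int j + Dt t N) mod int e"
        using mod_step[of _ "int b - int a" "Dt t N" 0 e j] cmod cont by simp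
      thus ?thesis using I B nuE mu by (intro conjI exI[of _ "2 * ?y"]) auto
    qed
  qed
qed


theorem proposition7p9:
  fixes e t j1 j2 :: nat and mu nu1 nu2 :: "nat list \<times> nat list"
  assumes "e > 1" and "odd e"
    and "is_partition (fst mu)" and "is_partition (snd mu)"
    and "j1 \<le> e - 1" and "j2 \<le> e - 1" and "j1 \<noteq> j2"
    and "ftilde e (charge e t) j1 mu = Some nu1"
    and "ftilde e (charge e t) j2 mu = Some nu2"
  shows "ecore e (Phi t nu1) \<noteq> ecore e (Phi t nu2)"
proof
  assume eq: "ecore e (Phi t nu1) = ecore e (Phi t nu2)"
  have e3: "3 \<le> e" using assms(1,2) by presburger
  have e0: "0 < e" using assms(1) by simp
  have jl: "j1 < e" "j2 < e" using assms(1,5,6) by auto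
  obtain g1 where g1: "addable_node mu g1" "residue e (charge e t) g1 = int j1" "nu1 = add_node mu g1"
    using ftilde_Some[OF assms(8)] by blast
  obtain g2 where g2: "addable_node mu g2" "residue e (charge e t) g2 = int j2" "nu2 = add_node mu g2"
    using ftilde_Some[OF assms(9)] by blast
  obtain a1 b1 jj1 where G1: "g1 = (a1, b1, jj1)" by (rule prod_cases3)
  obtain a2 b2 jj2 where G2: "g2 = (a2, b2, jj2)" by (rule prod_cases3)
  define N where "N = max (max (max (length (fst mu)) (length (snd mu))) (max (length (fst nu1)) (length (snd nu1))))
      (max (max (length (fst nu2)) (length (snd nu2))) (max (length (Phi t nu1)) (length (Phi t nu2))))"
  have NN: "length (fst mu) \<le> N" "length (snd mu) \<le> N" "length (fst nu1) \<le> N" "length (snd nu1) \<le> N"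
      "length (fst nu2) \<le> N" "length (snd nu2) \<le> N" "length (Phi t nu1) \<le> N" "length (Phi t nu2) \<le> N"
    unfolding N_def by linarith+
  let ?M = "M_of t N" and ?S = "SN t N mu"
  have m1: "is_partition (fst nu1) \<and> is_partition (snd nu1) \<and>
    (\<exists>z. z \<in> ?S \<and> z + 2 \<notin> ?S \<and> SN t N nu1 = insert (z + 2) (?S - {z}) \<and>
         int z mod int e = (2 * int j1 + Dt t N) mod int e)"
    using move_lemma[OF assms(3,4), of a1 b1 jj1 e t j1 nu1 N] g1 G1 assms(2) NN by simp
  have m2: "is_partition (fst nu2) \<and> is_partition (snd nu2) \<and>
    (\<exists>z. z \<in> ?S \<and> z + 2 \<notin> ?S \<and> SN t N nu2 = insert (z + 2) (?S - {z}) \<and>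
         int z mod int e = (2 * int j2 + Dt t N) mod int e)"
    using move_lemma[OF assms(3,4), of a2 b2 jj2 e t j2 nu2 N] g2 G2 assms(2) NN by simp
  obtain z1 where z1: "z1 \<in> ?S" "z1 + 2 \<notin> ?S" "SN t N nu1 = insert (z1 + 2) (?S - {z1})"
      "int z1 mod int e = (2 * int j1 + Dt t N) mod int e" using m1 by blast
  obtain z2 where z2: "z2 \<in> ?S" "z2 + 2 \<notin> ?S" "SN t N nu2 = insert (z2 + 2) (?S - {z2})"
      "int z2 mod int e = (2 * int j2 + Dt t N) mod int e" using m2 by blast
  have P1: "PhiP t nu1 (Phi t nu1)" using Phi_props m1 by blast
  have P2: "PhiP t nu2 (Phi t nu2)" using Phi_props m2 by blast
  have lP1: "length (Phi t nu1) \<le> ?M" using NN(7) kN[of N t] by simp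
  have lP2: "length (Phi t nu2) \<le> ?M" using NN(8) kN[of N t] by simp
  have b1: "beta ?M (Phi t nu1) = SN t N nu1" using Phi_char[OF _ _ NN(3,4) P1 lP1] m1 by blast
  have b2: "beta ?M (Phi t nu2) = SN t N nu2" using Phi_char[OF _ _ NN(5,6) P2 lP2] m2 by blast
  have r1: "rc e (beta ?M (ecore e (Phi t nu1))) = rc e (beta ?M (Phi t nu1))"
    using ecore_rc[OF _ e0 lP1] P1 unfolding PhiP_def by blast
  have r2: "rc e (beta ?M (ecore e (Phi t nu2))) = rc e (beta ?M (Phi t nu2))"
    using ecore_rc[OF _ e0 lP2] P2 unfolding PhiP_def by blast
  have "rc e (insert (z1 + 2) (?S - {z1})) = rc e (insert (z2 + 2) (?S - {z2}))"
    using r1 r2 eq b1 b2 z1(3) z2(3) by simp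
  moreover have fS: "finite ?S" unfolding SN_def by (intro finite_IL finite_beta)
  ultimately have "z1 mod e = z2 mod e" using rc_contra[OF fS z1(1,2) z2(1,2) e3] by blast
  hence "int z1 mod int e = int z2 mod int e" by (metis of_nat_mod)
  hence "(2 * int j1 + Dt t N) mod int e = (2 * int j2 + Dt t N) mod int e" using z1(4) z2(4) by simp
  hence "j1 = j2" using nt[OF assms(2) jl] by blast
  thus False using assms(7) by simp
qed


end
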